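(* Let $T=(V,E)$ be a finite tree with nonnegative vertex weights and positive edge lengths and total weight $\mathcal W$. Let $m\ge1$ and $k\ge1$ be integers. Then P1 has a placement $F$ of $m$ points of $T$ such that, for every set $S$ of $k$ points of $T$ with $S\cap F=\emptyset$, $$\mathcal Q_1(F,S)\ \ge\ \frac{m-k+1}{m+1}\,\mathcal W.$$
   Context: Model. $G=(V,E)$ is a finite connected graph with at least one edge. Each vertex $v$ has a weight $w(v)\ge 0$ and each edge $e$ has a length $w(e)>0$. $G$ is regarded as a metric space by identifying each edge $e=(u,v)$ with a segment of length $w(e)$ joining $u$ and $v$. A point of $G$ is a vertex or a point of an edge. $d(p,q)$ denotes the length of a shortest path in $G$ between points $p$ and $q$. For a finite nonempty set $A$ of points, $d(p,A)=\min_{a\in A}d(p,a)$. Player P1 places a set $F$ of $m\ge 1$ points of $G$. Afterwards Player P2 places a set $S$ of $k$ points of $G$ with $S\cap F=\emptyset$. A point $p$ is served by P2 if $d(p,S)\le d(p,F)$ (ties go to P2), and by P1 otherwise. The payoff of P2 is $$\mathcal Q_2(F,S)=\sum_{v\in V:\ d(v,S)\le d(v,F)} w(v)\;+\;\lambda\big(\{p \text{ in the interior of an edge}: d(p,S)\le d(p,F)\}\big),$$ where $\lambda$ is total length (one-dimensional Lebesgue measure along the edges). The total weight is $\mathcal W=\sum_{v\in V}w(v)+\sum_{e\in E}w(e)$, and the payoff of P1 is $\mathcal Q_1(F,S)=\mathcal W-\mathcal Q_2(F,S)$. Here $G$ is the tree $T$ (the One-Round $(m,k)$ Voronoi Game on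 $T$). *)

theory Defs
  imports "HOL-Analysis.Analysis"
begin

text \<open>A weighted graph is given by a vertex set V, a set E of edges, each undirected
edge stored exactly once as an ordered pair (u,v) (an arbitrary orientation),
vertex weights wv and edge lengths wl.\<close>

definition adj :: "('v \<times> 'v) set \<Rightarrow> 'v \<Rightarrow> 'v \<Rightarrow> bool" where
  "adj E u v \<longleftrightarrow> (u, v) \<in> E \<or> (v, u) \<in> E"

definition elen :: "('v \<times> 'v) set \<Rightarrow> ('v \<times> 'v \<Rightarrow> real) \<Rightarrow> 'v \<Rightarrow> 'v \<Rightarrow> real" where
  "elen E wl u v = (if (u, v) \<in> E then wl (u, v) else wl (v, u))"

definition is_walk :: "'v set \<Rightarrow> ('v \<times> 'v) set \<Rightarrow> 'v list \<Rightarrow> bool" where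
  "is_walk V E xs \<longleftrightarrow> xs \<noteq> [] \<and> set xs \<subseteq> V \<and>
     (\<forall>i. Suc i < length xs \<longrightarrow> adj E (xs ! i) (xs ! Suc i))"

definition walk_len :: "('v \<times> 'v) set \<Rightarrow> ('v \<times> 'v \<Rightarrow> real) \<Rightarrow> 'v list \<Rightarrow> real" where
  "walk_len E wl xs = (\<Sum>i<length xs - 1. elen E wl (xs ! i) (xs ! Suc i))"

definition connected_graph :: "'v set \<Rightarrow> ('v \<times> 'v) set \<Rightarrow> bool" where
  "connected_graph V E \<longleftrightarrow>
     (\<forall>u\<in>V. \<forall>v\<in>V. \<exists>xs. is_walk V E xs \<and> hd xs = u \<and> last xs = v)"

definition has_cycle :: "'v set \<Rightarrow> ('v \<times> 'v) set \<Rightarrow> bool" where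
  "has_cycle V E \<longleftrightarrow> (\<exists>xs. is_walk V E xs \<and> distinct xs \<and> length xs \<ge> 3 \<and>
      adj E (last xs) (hd xs))"

definition wgraph :: "'v set \<Rightarrow> ('v \<times> 'v) set \<Rightarrow> ('v \<Rightarrow> real) \<Rightarrow> ('v \<times> 'v \<Rightarrow> real) \<Rightarrow> bool" where
  "wgraph V E wv wl \<longleftrightarrow> finite V \<and> E \<subseteq> V \<times> V \<and> E \<noteq> {} \<and>
     (\<forall>(u, v)\<in>E. u \<noteq> v \<and> (v, u) \<notin> E) \<and>
     (\<forall>v\<in>V. wv v \<ge> 0) \<and> (\<forall>e\<in>E. wl e > 0)"

definition is_tree :: "'v set \<Rightarrow> ('v \<times> 'v) set \<Rightarrow> bool" where
  "is_tree V E \<longleftrightarrow> connected_graph V E \<and> \<not> has_cycle V E"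

definition vdist :: "'v set \<Rightarrow> ('v \<times> 'v) set \<Rightarrow> ('v \<times> 'v \<Rightarrow> real) \<Rightarrow> 'v \<Rightarrow> 'v \<Rightarrow> real" where
  "vdist V E wl u v = Inf {walk_len E wl xs | xs. is_walk V E xs \<and> hd xs = u \<and> last xs = v}"

text \<open>Points of the metric graph: a vertex, or an interior point of an edge (u,v)\<in>E
at distance t from u, with 0 < t < wl (u,v).\<close>
datatype 'v gpoint = Vx 'v | Ed "'v \<times> 'v" real

definition gpoints :: "'v set \<Rightarrow> ('v \<times> 'v) set \<Rightarrow> ('v \<times> 'v \<Rightarrow> real) \<Rightarrow> 'v gpoint set" where
  "gpoints V E wl = Vx ` V \<union> {Ed e t | e t. e \<in> E \<and> 0 < t \<and> t < wl e}"

fun exits :: "('v \<times> 'v \<Rightarrow> real) \<Rightarrow> 'v gpoint \<Rightarrow> ('v \<times> real) list" where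
  "exits wl (Vx v) = [(v, 0)]"
| "exits wl (Ed (u, v) t) = [(u, t), (v, wl (u, v) - t)]"

definition pdist :: "'v set \<Rightarrow> ('v \<times> 'v) set \<Rightarrow> ('v \<times> 'v \<Rightarrow> real) \<Rightarrow> 'v gpoint \<Rightarrow> 'v gpoint \<Rightarrow> real" where
  "pdist V E wl p q =
     Min ({a + vdist V E wl x y + b | x a y b. (x, a) \<in> set (exits wl p) \<and> (y, b) \<in> set (exits wl q)}
          \<union> (case (p, q) of (Ed e t, Ed e' s) \<Rightarrow> (if e = e' then {\<bar>t - s\<bar>} else {}) | _ \<Rightarrow> {}))"

definition setdist :: "'v set \<Rightarrow> ('v \<times> 'v) set \<Rightarrow> ('v \<times> 'v \<Rightarrow> real) \<Rightarrow> 'v gpoint \<Rightarrow> 'v gpoint set \<Rightarrow> real" where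
  "setdist V E wl p A = Min ((\<lambda>a. pdist V E wl p a) ` A)"

text \<open>Payoff of P2 (ties go to P2).\<close>
definition Q2 :: "'v set \<Rightarrow> ('v \<times> 'v) set \<Rightarrow> ('v \<Rightarrow> real) \<Rightarrow> ('v \<times> 'v \<Rightarrow> real)
    \<Rightarrow> 'v gpoint set \<Rightarrow> 'v gpoint set \<Rightarrow> real" where
  "Q2 V E wv wl F S =
     (\<Sum>v\<in>{v\<in>V. setdist V E wl (Vx v) S \<le> setdist V E wl (Vx v) F}. wv v)
   + (\<Sum>e\<in>E. measure lborel {t. 0 < t \<and> t < wl e \<and>
          setdist V E wl (Ed e t) S \<le> setdist V E wl (Ed e t) F})"

definition total_weight :: "'v set \<Rightarrow> ('v \<times> 'v) set \<Rightarrow> ('v \<Rightarrow> real) \<Rightarrow> ('v \<times> 'v \<Rightarrow> real) \<Rightarrow> real" where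
  "total_weight V E wv wl = (\<Sum>v\<in>V. wv v) + (\<Sum>e\<in>E. wl e)"

definition Q1 :: "'v set \<Rightarrow> ('v \<times> 'v) set \<Rightarrow> ('v \<Rightarrow> real) \<Rightarrow> ('v \<times> 'v \<Rightarrow> real)
    \<Rightarrow> 'v gpoint set \<Rightarrow> 'v gpoint set \<Rightarrow> real" where
  "Q1 V E wv wl F S = total_weight V E wv wl - Q2 V E wv wl F S"

end

theory Submission
  imports Defs
begin



lemma is_walk_single[simp]: "is_walk V E [a] \<longleftrightarrow> a \<in> V"
  by (auto simp: is_walk_def)

lemma is_walk_Cons2: "is_walk V E (a # b # xs) \<longleftrightarrow> a \<in> V \<and> adj E a b \<and> is_walk V E (b # xs)"
proof
  assume h: "is_walk V E (a # b # xs)"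
  have "adj E a b" using h unfolding is_walk_def by (metis length_Cons nth_Cons_0 nth_Cons_Suc zero_less_Suc Suc_less_eq)
  moreover have "\<forall>i. Suc i < length (b#xs) \<longrightarrow> adj E ((b#xs) ! i) ((b#xs) ! Suc i)"
  proof (intro allI impI)
    fix i assume "Suc i < length (b#xs)"
    then have "Suc (Suc i) < length (a#b#xs)" by simp
    then have "adj E ((a#b#xs) ! Suc i) ((a#b#xs) ! Suc (Suc i))" using h unfolding is_walk_def by blast
    then show "adj E ((b#xs) ! i) ((b#xs) ! Suc i)" by simp
  qed
  ultimately show "a \<in> V \<and> adj E a b \<and> is_walk V E (b # xs)" using h unfolding is_walk_def by auto
next
  assume h: "a \<in> V \<and> adj E a b \<and> is_walk V E (b # xs)"
  show "is_walk V E (a # b # xs)" unfolding is_walk_def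
  proof (intro conjI allI impI)
    show "a # b # xs \<noteq> []" by simp
    show "set (a # b # xs) \<subseteq> V" using h unfolding is_walk_def by auto
    fix i assume i: "Suc i < length (a # b # xs)"
    show "adj E ((a # b # xs) ! i) ((a # b # xs) ! Suc i)"
    proof (cases i)
      case 0 then show ?thesis using h by simp
    next
      case (Suc j)
      then have "Suc j < length (b#xs)" using i by simp
      then show ?thesis using h Suc unfolding is_walk_def by simp
    qed
  qed
qed

lemma is_walk_hd: "is_walk V E (y # ys) \<Longrightarrow> y \<in> V" by (auto simp: is_walk_def)

lemma walk_len_single[simp]: "walk_len E wl [a] = 0"
  by (simp add: walk_len_def)

lemma walk_len_Cons2: "walk_len E wl (a # b # xs) = elen E wl a b + walk_len E wl (b # xs)"
  unfolding walk_len_def by (simp add: sum.lessThan_Suc_shift del: sum.lessThan_Suc)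

lemma walk_len_append: "walk_len E wl (xs @ [y]) + walk_len E wl (y # ys) = walk_len E wl (xs @ y # ys)"
proof (induction xs)
  case Nil then show ?case by simp
next
  case (Cons a xs)
  show ?case
  proof (cases xs)
    case Nil then show ?thesis by (simp add: walk_len_Cons2)
  next
    case (Cons b zs)
    then show ?thesis using Cons.IH by (simp add: walk_len_Cons2)
  qed
qed

lemma is_walk_append: "is_walk V E (xs @ y # ys) \<longleftrightarrow> is_walk V E (xs @ [y]) \<and> is_walk V E (y # ys)"
proof (induction xs)
  case Nil
  show ?case
  proof (cases ys)
    case Nil then show ?thesis by simp
  next
    case (Cons z zs) then show ?thesis by (auto simp: is_walk_Cons2)
  qed
next
  case (Cons a xs)
  show ?case
  proof (cases xs)
    case Nil
    then show ?thesis by (auto simp: is_walk_Cons2 dest: is_walk_hd)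
  next
    case (Cons b zs)
    then show ?thesis using Cons.IH by (auto simp: is_walk_Cons2)
  qed
qed

lemma adj_sym: "adj E a b \<longleftrightarrow> adj E b a" by (auto simp: adj_def)

lemma elen_sym: "adj E a b \<Longrightarrow> \<forall>(u,v)\<in>E. (v,u) \<notin> E \<Longrightarrow> elen E wl a b = elen E wl b a"
  by (auto simp: adj_def elen_def)

lemma elen_pos: "adj E a b \<Longrightarrow> \<forall>e\<in>E. wl e > 0 \<Longrightarrow> elen E wl a b > 0"
  by (auto simp: adj_def elen_def)

lemma walk_len_nonneg: "is_walk V E xs \<Longrightarrow> \<forall>e\<in>E. wl e > 0 \<Longrightarrow> walk_len E wl xs \<ge> 0"
proof (induction xs rule: induct_list012)
  case 1 then show ?case by (simp add: walk_len_def)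
next
  case (2 x) then show ?case by simp
next
  case (3 x y zs)
  then show ?case using elen_pos[of E x y wl] by (auto simp: is_walk_Cons2 walk_len_Cons2)
qed

lemma is_walk_rev: "is_walk V E (rev xs) \<longleftrightarrow> is_walk V E xs"
proof -
  have *: "is_walk V E xs \<Longrightarrow> is_walk V E (rev xs)" for xs
  proof (induction xs rule: induct_list012)
    case 1 then show ?case by simp
  next
    case (2 x) then show ?case by simp
  next
    case (3 x y zs)
    have "rev (x # y # zs) = rev zs @ y # [x]" by simp
    moreover have "is_walk V E (rev zs @ [y])" using 3 by (auto simp: is_walk_Cons2)
    moreover have "is_walk V E [y, x]" using 3 by (auto simp: is_walk_Cons2 adj_sym is_walk_def)
    ultimately show ?case using is_walk_append[of V E "rev zs" y "[x]"] by simp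
  qed
  show ?thesis using *[of xs] *[of "rev xs"] by auto
qed

lemma walk_len_rev: "is_walk V E xs \<Longrightarrow> \<forall>(u,v)\<in>E. (v,u) \<notin> E \<Longrightarrow> walk_len E wl (rev xs) = walk_len E wl xs"
proof (induction xs rule: induct_list012)
  case 1 then show ?case by simp
next
  case (2 x) then show ?case by simp
next
  case (3 x y zs)
  have "walk_len E wl (rev (x # y # zs)) = walk_len E wl (rev zs @ [y]) + walk_len E wl [y, x]"
    using walk_len_append[of E wl "rev zs" y "[x]"] by simp
  also have "walk_len E wl (rev zs @ [y]) = walk_len E wl (y # zs)" using 3 by (auto simp: is_walk_Cons2)
  also have "walk_len E wl [y, x] = elen E wl x y" using 3 elen_sym[of E x y wl]
    by (auto simp: walk_len_Cons2 is_walk_Cons2)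
  finally show ?case by (simp add: walk_len_Cons2)
qed




definition walks :: "'v set \<Rightarrow> ('v \<times> 'v) set \<Rightarrow> ('v \<times> 'v \<Rightarrow> real) \<Rightarrow> 'v \<Rightarrow> 'v \<Rightarrow> real set" where
  "walks V E wl u v = {walk_len E wl xs | xs. is_walk V E xs \<and> hd xs = u \<and> last xs = v}"

lemma vdist_walks: "vdist V E wl u v = Inf (walks V E wl u v)"
  by (simp add: vdist_def walks_def)

locale wg =
  fixes V :: "'v set" and E :: "('v \<times> 'v) set" and wl :: "'v \<times> 'v \<Rightarrow> real"
  assumes finV: "finite V" and subE: "E \<subseteq> V \<times> V"
    and anti: "\<forall>(u,v)\<in>E. u \<noteq> v \<and> (v,u) \<notin> E"
    and posw: "\<forall>e\<in>E. wl e > 0"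
    and conn: "connected_graph V E"
begin

lemma anti': "\<forall>(u,v)\<in>E. (v,u) \<notin> E" using anti by auto

lemma walks_bdd: "bdd_below (walks V E wl u v)"
  unfolding bdd_below_def
proof (intro exI ballI)
  fix r assume "r \<in> walks V E wl u v"
  then obtain xs where "is_walk V E xs" "r = walk_len E wl xs" unfolding walks_def by blast
  then show "0 \<le> r" using walk_len_nonneg posw by blast
qed

lemma walks_ne: "u \<in> V \<Longrightarrow> v \<in> V \<Longrightarrow> walks V E wl u v \<noteq> {}"
  using conn unfolding connected_graph_def walks_def by blast

lemma vdist_le: "is_walk V E xs \<Longrightarrow> hd xs = u \<Longrightarrow> last xs = v \<Longrightarrow> vdist V E wl u v \<le> walk_len E wl xs"
  unfolding vdist_walks by (rule cInf_lower[OF _ walks_bdd]) (auto simp: walks_def)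

lemma vdist_ge: "u \<in> V \<Longrightarrow> v \<in> V \<Longrightarrow>
   (\<And>xs. is_walk V E xs \<Longrightarrow> hd xs = u \<Longrightarrow> last xs = v \<Longrightarrow> b \<le> walk_len E wl xs) \<Longrightarrow> b \<le> vdist V E wl u v"
  unfolding vdist_walks by (rule cInf_greatest[OF walks_ne]) (auto simp: walks_def)

lemma vdist_nonneg: "u \<in> V \<Longrightarrow> v \<in> V \<Longrightarrow> vdist V E wl u v \<ge> 0"
  by (rule vdist_ge) (use walk_len_nonneg posw in blast)+

lemma vdist_refl: "u \<in> V \<Longrightarrow> vdist V E wl u u = 0"
  using vdist_le[of "[u]" u u] vdist_nonneg[of u u] by simp

lemma walks_sym: "walks V E wl u v = walks V E wl v u"
proof -
  have "walks V E wl u v \<subseteq> walks V E wl v u" for u v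
  proof
    fix r assume "r \<in> walks V E wl u v"
    then obtain xs where xs: "is_walk V E xs" "hd xs = u" "last xs = v" "r = walk_len E wl xs"
      unfolding walks_def by blast
    have "xs \<noteq> []" using xs(1) by (simp add: is_walk_def)
    have "is_walk V E (rev xs)" using xs(1) is_walk_rev by blast
    moreover have "hd (rev xs) = v" using xs(3) by (simp add: hd_rev)
    moreover have "last (rev xs) = u" using xs(2) by (simp add: last_rev)
    moreover have "walk_len E wl (rev xs) = r" using walk_len_rev[OF xs(1) anti'] xs(4) by simp
    ultimately show "r \<in> walks V E wl v u" unfolding walks_def by (intro CollectI exI[of _ "rev xs"]) simp
  qed
  then show ?thesis by (intro equalityI) 
qed

lemma vdist_sym: "vdist V E wl u v = vdist V E wl v u"
  unfolding vdist_walks by (rule arg_cong[where f=Inf, OF walks_sym])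

lemma pdist_sym: "pdist V E wl p q = pdist V E wl q p"
proof -
  have A: "{a + vdist V E wl x y + b | x a y b. (x, a) \<in> set (exits wl p) \<and> (y, b) \<in> set (exits wl q)}
     = {a + vdist V E wl x y + b | x a y b. (x, a) \<in> set (exits wl q) \<and> (y, b) \<in> set (exits wl p)}"
  proof (intro equalityI subsetI)
    fix r assume "r \<in> {a + vdist V E wl x y + b | x a y b. (x, a) \<in> set (exits wl p) \<and> (y, b) \<in> set (exits wl q)}"
    then obtain x a y b where "r = a + vdist V E wl x y + b" "(x, a) \<in> set (exits wl p)" "(y, b) \<in> set (exits wl q)" by blast
    then show "r \<in> {a + vdist V E wl x y + b | x a y b. (x, a) \<in> set (exits wl q) \<and> (y, b) \<in> set (exits wl p)}"
      using vdist_sym[of x y] by (intro CollectI exI[of _ y] exI[of _ b] exI[of _ x] exI[of _ a]) auto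
  next
    fix r assume "r \<in> {a + vdist V E wl x y + b | x a y b. (x, a) \<in> set (exits wl q) \<and> (y, b) \<in> set (exits wl p)}"
    then obtain x a y b where "r = a + vdist V E wl x y + b" "(x, a) \<in> set (exits wl q)" "(y, b) \<in> set (exits wl p)" by blast
    then show "r \<in> {a + vdist V E wl x y + b | x a y b. (x, a) \<in> set (exits wl p) \<and> (y, b) \<in> set (exits wl q)}"
      using vdist_sym[of x y] by (intro CollectI exI[of _ y] exI[of _ b] exI[of _ x] exI[of _ a]) auto
  qed
  have B: "(case (p, q) of (Ed e t, Ed e' s) \<Rightarrow> (if e = e' then {\<bar>t - s\<bar>} else {}) | _ \<Rightarrow> {})
      = (case (q, p) of (Ed e t, Ed e' s) \<Rightarrow> (if e = e' then {\<bar>t - s\<bar>} else {}) | _ \<Rightarrow> {})"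
    by (cases p; cases q) (auto simp: abs_minus_commute)
  show ?thesis unfolding pdist_def A B ..
qed

end




locale leafg = wg +
  fixes l u :: 'v and e0 :: "'v \<times> 'v"
  assumes lV: "l \<in> V" and uV: "u \<in> V" and lu: "l \<noteq> u" and e0E: "e0 \<in> E"
    and e0: "e0 = (l, u) \<or> e0 = (u, l)"
    and leafadj: "\<And>z. adj E l z \<Longrightarrow> z = u"
begin

abbreviation "V' \<equiv> V - {l}"
abbreviation "E' \<equiv> E - {e0}"
abbreviation "w \<equiv> wl e0"

lemma E'_nl: "(a, b) \<in> E' \<Longrightarrow> a \<noteq> l \<and> b \<noteq> l"
proof
  assume ab: "(a, b) \<in> E'"
  show "a \<noteq> l"
  proof
    assume "a = l"
    then have "adj E l b" using ab by (auto simp: adj_def)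
    then have "b = u" by (rule leafadj)
    then show False using ab \<open>a = l\<close> e0 e0E anti by auto
  qed
  show "b \<noteq> l"
  proof
    assume "b = l"
    then have "adj E l a" using ab by (auto simp: adj_def)
    then have "a = u" by (rule leafadj)
    then show False using ab \<open>b = l\<close> e0 e0E anti by auto
  qed
qed

lemma e0_l: "e0 \<notin> E'" by simp

lemma adj_E': "adj E a b \<Longrightarrow> a \<noteq> l \<Longrightarrow> b \<noteq> l \<Longrightarrow> adj E' a b"
  using e0 by (auto simp: adj_def)

lemma adj_E'_E: "adj E' a b \<Longrightarrow> adj E a b" by (auto simp: adj_def)

lemma elen_E': "a \<noteq> l \<Longrightarrow> b \<noteq> l \<Longrightarrow> elen E' wl a b = elen E wl a b"
  using e0 by (auto simp: elen_def)

lemma adj_lu: "adj E l u" "adj E u l" using e0 e0E by (auto simp: adj_def)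

lemma elen_lu: "elen E wl l u = w" "elen E wl u l = w"
  using e0 e0E anti by (auto simp: elen_def)

lemma w_pos: "w > 0" using posw e0E by blast

lemma walk'_walk: "is_walk V' E' ys \<Longrightarrow> is_walk V E ys \<and> walk_len E' wl ys = walk_len E wl ys"
proof (induction ys rule: induct_list012)
  case 1 then show ?case by (simp add: is_walk_def)
next
  case (2 x) then show ?case by simp
next
  case (3 x y zs)
  then have "x \<in> V'" "adj E' x y" "is_walk V' E' (y # zs)" by (auto simp: is_walk_Cons2)
  moreover have "y \<in> V'" using 3 by (auto simp: is_walk_Cons2 dest: is_walk_hd)
  ultimately show ?case using 3 adj_E'_E elen_E'[of x y] by (auto simp: is_walk_Cons2 walk_len_Cons2)
qed

lemma walk_walk': "is_walk V E xs \<Longrightarrow> l \<notin> set xs \<Longrightarrow> is_walk V' E' xs \<and> walk_len E' wl xs = walk_len E wl xs"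
proof (induction xs rule: induct_list012)
  case 1 then show ?case by (simp add: is_walk_def)
next
  case (2 x) then show ?case by simp
next
  case (3 x y zs)
  then have "x \<in> V" "adj E x y" "is_walk V E (y # zs)" "x \<noteq> l" "y \<noteq> l" by (auto simp: is_walk_Cons2)
  then show ?case using 3 adj_E' elen_E'[of x y] by (auto simp: is_walk_Cons2 walk_len_Cons2)
qed

lemma shortcut:
  "is_walk V E xs \<Longrightarrow> hd xs \<noteq> l \<Longrightarrow> last xs \<noteq> l \<Longrightarrow>
    \<exists>ys. is_walk V' E' ys \<and> hd ys = hd xs \<and> last ys = last xs \<and> walk_len E' wl ys \<le> walk_len E wl xs"
proof (induction "length xs" arbitrary: xs rule: less_induct)
  case less
  show ?case
  proof (cases "l \<in> set xs")
    case False
    then show ?thesis using walk_walk'[OF less.prems(1)] by auto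
  next
    case True
    then obtain A B where xsAB: "xs = A @ l # B" by (meson split_list)
    have "A \<noteq> []" using less.prems(2) xsAB by auto
    have "B \<noteq> []" using less.prems(3) xsAB by auto
    then obtain b B0 where B: "B = b # B0" by (cases B) auto
    obtain A0 a where A: "A = A0 @ [a]" using \<open>A \<noteq> []\<close> by (metis rev_exhaust)
    have w1: "is_walk V E (A0 @ [a])" "is_walk V E (a # l # b # B0)"
      using less.prems(1) is_walk_append[of V E A0 a "l # b # B0"] xsAB A B by auto
    then have "adj E a l" "is_walk V E (l # b # B0)" by (auto simp: is_walk_Cons2)
    then have "a = u" using leafadj adj_sym by metis
    have "adj E l b" "is_walk V E (b # B0)" using w1 by (auto simp: is_walk_Cons2)
    then have "b = u" using leafadj by metis
    define xs' where "xs' = A0 @ u # B0"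
    have wx': "is_walk V E xs'" unfolding xs'_def
      using is_walk_append[of V E A0 u B0] w1 \<open>a = u\<close> \<open>is_walk V E (b # B0)\<close> \<open>b = u\<close> by simp
    have "walk_len E wl xs = walk_len E wl (A0 @ [a]) + walk_len E wl (a # l # b # B0)"
      using walk_len_append[of E wl A0 a "l # b # B0"] xsAB A B by simp
    also have "walk_len E wl (a # l # b # B0) = 2 * w + walk_len E wl (u # B0)"
      using \<open>a = u\<close> \<open>b = u\<close> elen_lu by (simp add: walk_len_Cons2)
    finally have "walk_len E wl xs = 2 * w + walk_len E wl xs'"
      unfolding xs'_def using walk_len_append[of E wl A0 u B0] \<open>a = u\<close> by simp
    then have le: "walk_len E wl xs' \<le> walk_len E wl xs" using w_pos by simp
    have hd': "hd xs' = hd xs" unfolding xs'_def using xsAB A \<open>a = u\<close> by (cases A0) auto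
    have last': "last xs' = last xs" unfolding xs'_def using xsAB B \<open>b = u\<close> by (cases B0) auto
    have "length xs' < length xs" unfolding xs'_def using xsAB A B by simp
    then obtain ys where "is_walk V' E' ys \<and> hd ys = hd xs' \<and> last ys = last xs' \<and> walk_len E' wl ys \<le> walk_len E wl xs'"
      using less.hyps[of xs'] wx' hd' last' less.prems by auto
    then show ?thesis using hd' last' le by auto
  qed
qed

lemma wg': "wg V' E' wl"
proof
  show "finite V'" using finV by simp
  show "E' \<subseteq> V' \<times> V'" using subE E'_nl by auto
  show "\<forall>(a, b)\<in>E'. a \<noteq> b \<and> (b, a) \<notin> E'" using anti by auto
  show "\<forall>e\<in>E'. 0 < wl e" using posw by auto
  show "connected_graph V' E'" unfolding connected_graph_def
  proof (intro ballI)
    fix x y assume xy: "x \<in> V'" "y \<in> V'"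
    then obtain xs where "is_walk V E xs" "hd xs = x" "last xs = y" using conn unfolding connected_graph_def by blast
    then show "\<exists>xs. is_walk V' E' xs \<and> hd xs = x \<and> last xs = y" using shortcut xy by fastforce
  qed
qed

interpretation T': wg V' E' wl by (rule wg')

lemma vdist_V1: "x \<in> V' \<Longrightarrow> y \<in> V' \<Longrightarrow> vdist V E wl x y = vdist V' E' wl x y"
proof (rule antisym)
  assume xy: "x \<in> V'" "y \<in> V'"
  show "vdist V E wl x y \<le> vdist V' E' wl x y"
  proof (rule T'.vdist_ge[OF xy])
    fix ys assume "is_walk V' E' ys" "hd ys = x" "last ys = y"
    then show "vdist V E wl x y \<le> walk_len E' wl ys" using walk'_walk vdist_le by metis
  qed
  show "vdist V' E' wl x y \<le> vdist V E wl x y"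
  proof (rule vdist_ge)
    show "x \<in> V" "y \<in> V" using xy by auto
    fix xs assume "is_walk V E xs" "hd xs = x" "last xs = y"
    then obtain ys where "is_walk V' E' ys \<and> hd ys = x \<and> last ys = y \<and> walk_len E' wl ys \<le> walk_len E wl xs"
      using shortcut xy by fastforce
    then show "vdist V' E' wl x y \<le> walk_len E wl xs" using T'.vdist_le by force
  qed
qed

lemma vdist_V2: "y \<in> V' \<Longrightarrow> vdist V E wl l y = w + vdist V E wl u y"
proof (rule antisym)
  assume y: "y \<in> V'"
  show "vdist V E wl l y \<le> w + vdist V E wl u y"
  proof -
    have "w + walk_len E wl xs \<ge> vdist V E wl l y" if H: "is_walk V E xs" "hd xs = u" "last xs = y" for xs
    proof -
      obtain zs where xs: "xs = u # zs" using H by (cases xs) (auto simp: is_walk_def)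
      have "is_walk V E (l # xs)" using H xs lV adj_lu by (simp add: is_walk_Cons2)
      moreover have "walk_len E wl (l # xs) = w + walk_len E wl xs" using xs elen_lu by (simp add: walk_len_Cons2)
      ultimately show ?thesis using vdist_le[of "l # xs" l y] H xs by simp
    qed
    then have "vdist V E wl l y - w \<le> vdist V E wl u y"
      using vdist_ge[of u y "vdist V E wl l y - w"] uV y by force
    then show ?thesis by linarith
  qed
  show "w + vdist V E wl u y \<le> vdist V E wl l y"
  proof (rule vdist_ge)
    show "l \<in> V" "y \<in> V" using lV y by auto
    fix xs assume xs: "is_walk V E xs" "hd xs = l" "last xs = y"
    obtain zs where "xs = l # zs" using xs by (cases xs) (auto simp: is_walk_def)
    moreover have "zs \<noteq> []" using xs y \<open>xs = l # zs\<close> by auto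
    ultimately obtain b ys where xs2: "xs = l # b # ys" by (cases zs) auto
    then have "adj E l b" "is_walk V E (b # ys)" using xs by (auto simp: is_walk_Cons2)
    then have "b = u" using leafadj by blast
    have "walk_len E wl xs = w + walk_len E wl (u # ys)" using xs2 \<open>b = u\<close> elen_lu by (simp add: walk_len_Cons2)
    moreover have "vdist V E wl u y \<le> walk_len E wl (u # ys)"
      using vdist_le[of "u # ys" u y] \<open>is_walk V E (b # ys)\<close> \<open>b = u\<close> xs xs2 by simp
    ultimately show "w + vdist V E wl u y \<le> walk_len E wl xs" by simp
  qed
qed

lemma vdist_lu: "vdist V E wl l u = w" "vdist V E wl u l = w"
  using vdist_V2[of u] vdist_refl[OF uV] uV lu vdist_sym by auto

lemma vdist_ll: "vdist V E wl l l = 0" using vdist_refl lV by simp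

end



lemma pd_finite: "finite {a + vdist V E wl x y + b | x a y b. (x,a) \<in> set A \<and> (y,b) \<in> set B}"
proof -
  have "{a + vdist V E wl x y + b | x a y b. (x,a) \<in> set A \<and> (y,b) \<in> set B}
     \<subseteq> (\<lambda>((x,a),(y,b)). a + vdist V E wl x y + b) ` (set A \<times> set B)" by force
  then show ?thesis by (rule finite_subset) auto
qed

lemma pdist_finite: "finite ({a + vdist V E wl x y + b | x a y b. (x, a) \<in> set (exits wl p) \<and> (y, b) \<in> set (exits wl q)}
          \<union> (case (p, q) of (Ed e t, Ed e' s) \<Rightarrow> (if e = e' then {\<bar>t - s\<bar>} else {}) | _ \<Rightarrow> {}))"
  by (rule finite_UnI[OF pd_finite]) (auto split: gpoint.splits)

lemma exits_ne: "set (exits wl p) \<noteq> {}"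
  by (cases p) auto

lemma pdist_le: "(x,a) \<in> set (exits wl p) \<Longrightarrow> (y,b) \<in> set (exits wl q) \<Longrightarrow> pdist V E wl p q \<le> a + vdist V E wl x y + b"
  unfolding pdist_def by (rule Min_le[OF pdist_finite]) blast

lemma pdist_Vx: "pdist V E wl (Vx x) q = Min {vdist V E wl x y + b | y b. (y, b) \<in> set (exits wl q)}"
proof -
  have "{a + vdist V E wl x' y + b | x' a y b. (x', a) \<in> set (exits wl (Vx x)) \<and> (y, b) \<in> set (exits wl q)}
     = {vdist V E wl x y + b | y b. (y, b) \<in> set (exits wl q)}" by auto
  then show ?thesis unfolding pdist_def by simp
qed

lemma exitsVx_finite: "finite {vdist V E wl x y + b | y b. (y, b) \<in> set (exits wl q)}"
proof -
  have "{vdist V E wl x y + b | y b. (y, b) \<in> set (exits wl q)} \<subseteq> (\<lambda>(y,b). vdist V E wl x y + b) ` set (exits wl q)" by force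
  then show ?thesis by (rule finite_subset) auto
qed

lemma exitsVx_ne: "{vdist V E wl x y + b | y b. (y, b) \<in> set (exits wl q)} \<noteq> {}"
proof -
  obtain y b where yb: "(y, b) \<in> set (exits wl q)" using exits_ne[of wl q] by (metis all_not_in_conv surj_pair)
  have "vdist V E wl x y + b \<in> {vdist V E wl x y + b | y b. (y, b) \<in> set (exits wl q)}"
    using yb by (intro CollectI exI[of _ y] exI[of _ b]) simp
  then show ?thesis by (metis empty_iff)
qed

lemma set_sub4:
  fixes f g :: "'v \<Rightarrow> 'v \<Rightarrow> real" and A B :: "('v \<times> real) set"
  assumes h: "\<And>x a y b. (x,a) \<in> A \<Longrightarrow> (y,b) \<in> B \<Longrightarrow> f x y = g x y"
  shows "{a + f x y + b | x a y b. (x,a) \<in> A \<and> (y,b) \<in> B} \<subseteq> {a + g x y + b | x a y b. (x,a) \<in> A \<and> (y,b) \<in> B}"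
proof (rule subsetI)
  fix r
  assume "r \<in> {a + f x y + b | x a y b. (x,a) \<in> A \<and> (y,b) \<in> B}"
  then obtain x a y b where r: "r = a + f x y + b" "(x,a) \<in> A" "(y,b) \<in> B" by blast
  have e: "r = a + g x y + b" using r(1) h[OF r(2) r(3)] by simp
  show "r \<in> {a + g x y + b | x a y b. (x,a) \<in> A \<and> (y,b) \<in> B}"
    using e r(2) r(3) by blast
qed

lemma set_cong4: fixes f g :: "'v \<Rightarrow> 'v \<Rightarrow> real" and A B :: "('v \<times> real) set" shows "(\<And>x a y b. (x,a) \<in> A \<Longrightarrow> (y,b) \<in> B \<Longrightarrow> f x y = g x y) \<Longrightarrow>
  {a + f x y + b | x a y b. (x,a) \<in> A \<and> (y,b) \<in> B} = {a + g x y + b | x a y b. (x,a) \<in> A \<and> (y,b) \<in> B}"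
  by (rule equalityI; rule set_sub4) auto

context leafg
begin

definition lp :: "real \<Rightarrow> 'v gpoint" where
  "lp \<pi> = (if \<pi> = 0 then Vx l else Ed e0 (if e0 = (l, u) then \<pi> else w - \<pi>))"

lemma exits_lp: "0 < \<pi> \<Longrightarrow> set (exits wl (lp \<pi>)) = {(l, \<pi>), (u, w - \<pi>)}"
  using e0 lu by (auto simp: lp_def)

lemma exits_lp0: "set (exits wl (lp 0)) = {(l, 0)}"
  by (simp add: lp_def)

interpretation T': wg V' E' wl by (rule wg')

lemma exits_V': "p \<in> gpoints V' E' wl \<Longrightarrow> (x, a) \<in> set (exits wl p) \<Longrightarrow> x \<in> V'"
  using T'.subE by (auto simp: gpoints_def)

lemma pdist_D1: "p \<in> gpoints V' E' wl \<Longrightarrow> q \<in> gpoints V' E' wl \<Longrightarrow> pdist V E wl p q = pdist V' E' wl p q"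
proof -
  assume pq: "p \<in> gpoints V' E' wl" "q \<in> gpoints V' E' wl"
  have "{a + vdist V E wl x y + b | x a y b. (x, a) \<in> set (exits wl p) \<and> (y, b) \<in> set (exits wl q)}
     = {a + vdist V' E' wl x y + b | x a y b. (x, a) \<in> set (exits wl p) \<and> (y, b) \<in> set (exits wl q)}"
    by (rule set_cong4) (use vdist_V1 exits_V'[OF pq(1)] exits_V'[OF pq(2)] in blast)
  then show ?thesis unfolding pdist_def by simp
qed

lemma gp_lp_notin: "lp \<pi> \<notin> gpoints V' E' wl"
  by (auto simp: lp_def gpoints_def)

lemma lp_in: "0 \<le> \<pi> \<Longrightarrow> \<pi> < w \<Longrightarrow> lp \<pi> \<in> gpoints V E wl"
proof -
  assume h: "0 \<le> \<pi>" "\<pi> < w"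
  show ?thesis
  proof (cases "\<pi> = 0")
    case True then show ?thesis using lV by (simp add: lp_def gpoints_def)
  next
    case False
    let ?t = "if e0 = (l, u) then \<pi> else w - \<pi>"
    have "0 < ?t" "?t < wl e0" using h False by auto
    then have "Ed e0 ?t \<in> gpoints V E wl" using e0E unfolding gpoints_def by blast
    then show ?thesis using False by (simp add: lp_def)
  qed
qed

lemma gpoints_T': "gpoints V' E' wl \<subseteq> gpoints V E wl"
  by (auto simp: gpoints_def)

lemma gpoints_split: "gpoints V E wl = gpoints V' E' wl \<union> lp ` {\<pi>. 0 \<le> \<pi> \<and> \<pi> < w}"
proof (intro equalityI subsetI)
  fix p assume p: "p \<in> gpoints V E wl"
  show "p \<in> gpoints V' E' wl \<union> lp ` {\<pi>. 0 \<le> \<pi> \<and> \<pi> < w}"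
  proof (cases p)
    case (Vx x)
    show ?thesis
    proof (cases "x = l")
      case True
      then have "p = lp 0" using Vx by (simp add: lp_def)
      moreover have "(0::real) \<in> {\<pi>. 0 \<le> \<pi> \<and> \<pi> < w}" using w_pos by simp
      ultimately show ?thesis by blast
    next
      case False then show ?thesis using p Vx by (auto simp: gpoints_def)
    qed
  next
    case (Ed e t)
    then have et: "e \<in> E" "0 < t" "t < wl e" using p by (auto simp: gpoints_def)
    show ?thesis
    proof (cases "e = e0")
      case False
      then have "e \<in> E'" using et by simp
      then have "Ed e t \<in> gpoints V' E' wl" using et unfolding gpoints_def by blast
      then show ?thesis using Ed by simp
    next
      case True
      define \<pi> where "\<pi> = (if e0 = (l, u) then t else w - t)"
      have "0 < \<pi>" "\<pi> < w" using et True by (auto simp: \<pi>_def)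
      moreover have "lp \<pi> = p" using Ed True \<open>0 < \<pi>\<close> by (auto simp: lp_def \<pi>_def)
      ultimately show ?thesis by force
    qed
  qed
next
  fix p assume "p \<in> gpoints V' E' wl \<union> lp ` {\<pi>. 0 \<le> \<pi> \<and> \<pi> < w}"
  then show "p \<in> gpoints V E wl" using gpoints_T' lp_in by auto
qed

lemma lp_inj: "0 \<le> \<pi> \<Longrightarrow> 0 \<le> \<pi>' \<Longrightarrow> lp \<pi> = lp \<pi>' \<Longrightarrow> \<pi> = \<pi>'"
  by (auto simp: lp_def split: if_splits)

lemma pdist_D2:
  assumes \<pi>: "0 \<le> \<pi>" "\<pi> < w" and q: "q \<in> gpoints V' E' wl"
  shows "pdist V E wl (lp \<pi>) q = (w - \<pi>) + pdist V' E' wl (Vx u) q"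
proof -
  let ?M = "Min {vdist V' E' wl u y + b | y b. (y, b) \<in> set (exits wl q)}"
  have M: "pdist V' E' wl (Vx u) q = ?M" by (rule pdist_Vx)
  obtain y0 b0 where y0: "(y0, b0) \<in> set (exits wl q)" "?M = vdist V' E' wl u y0 + b0"
    using Min_in[OF exitsVx_finite exitsVx_ne, of V' E' wl u q] by auto
  have Mle: "?M \<le> vdist V E wl u y + b" if "(y, b) \<in> set (exits wl q)" for y b
  proof -
    have "vdist V E wl u y = vdist V' E' wl u y" using vdist_V1 uV lu exits_V'[OF q that] by auto
    then show ?thesis using that by (intro Min_le[OF exitsVx_finite]) auto
  qed
  have y0V: "y0 \<in> V'" using exits_V'[OF q y0(1)] .
  have dir: "(case (lp \<pi>, q) of (Ed e t, Ed e' s) \<Rightarrow> (if e = e' then {\<bar>t - s\<bar>} else {}) | _ \<Rightarrow> {}) = {}"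
    using q by (cases q) (auto simp: lp_def gpoints_def)
  let ?S = "{a + vdist V E wl x y + b | x a y b. (x, a) \<in> set (exits wl (lp \<pi>)) \<and> (y, b) \<in> set (exits wl q)}"
  have "Min ?S = (w - \<pi>) + ?M"
  proof (rule Min_eqI)
    show "finite ?S" by (rule pd_finite)
    fix r assume "r \<in> ?S"
    then obtain x a y b where r: "r = a + vdist V E wl x y + b" "(x, a) \<in> set (exits wl (lp \<pi>))" "(y, b) \<in> set (exits wl q)"
      by blast
    have yV: "y \<in> V'" using exits_V'[OF q r(3)] .
    have "x = l \<and> a = \<pi> \<or> x = u \<and> a = w - \<pi>"
      using r(2) exits_lp exits_lp0 \<pi> by (cases "\<pi> = 0") auto
    then show "w - \<pi> + ?M \<le> r"
    proof
      assume "x = l \<and> a = \<pi>"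
      then show ?thesis using r(1) vdist_V2[OF yV] Mle[OF r(3)] \<pi> by simp
    next
      assume "x = u \<and> a = w - \<pi>"
      then show ?thesis using r(1) Mle[OF r(3)] by simp
    qed
  next
    show "w - \<pi> + ?M \<in> ?S"
    proof (cases "\<pi> = 0")
      case True
      have "vdist V E wl l y0 = w + vdist V' E' wl u y0" using vdist_V2[OF y0V] vdist_V1[of u y0] uV lu y0V by simp
      then have "w - \<pi> + ?M = 0 + vdist V E wl l y0 + b0" using y0 True by simp
      moreover have "(l, 0) \<in> set (exits wl (lp \<pi>))" using True exits_lp0 by simp
      ultimately show ?thesis using y0(1) by blast
    next
      case False
      have "vdist V E wl u y0 = vdist V' E' wl u y0" using vdist_V1[of u y0] uV lu y0V by simp
      then have "w - \<pi> + ?M = (w - \<pi>) + vdist V E wl u y0 + b0" using y0 by simp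
      moreover have "(u, w - \<pi>) \<in> set (exits wl (lp \<pi>))" using False exits_lp \<pi> by simp
      ultimately show ?thesis using y0(1) by blast
    qed
  qed
  then show ?thesis unfolding pdist_def dir M by simp
qed

lemma pdist_D3:
  assumes \<pi>: "0 \<le> \<pi>" "\<pi> < w" and \<pi>': "0 \<le> \<pi>'" "\<pi>' < w"
  shows "pdist V E wl (lp \<pi>) (lp \<pi>') = \<bar>\<pi> - \<pi>'\<bar>"
proof -
  let ?S = "{a + vdist V E wl x y + b | x a y b. (x, a) \<in> set (exits wl (lp \<pi>)) \<and> (y, b) \<in> set (exits wl (lp \<pi>'))}"
  let ?D = "(case (lp \<pi>, lp \<pi>') of (Ed e t, Ed e' s) \<Rightarrow> (if e = e' then {\<bar>t - s\<bar>} else {}) | _ \<Rightarrow> {})"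
  have D: "?D = (if \<pi> = 0 \<or> \<pi>' = 0 then {} else {\<bar>\<pi> - \<pi>'\<bar>})"
    by (auto simp: lp_def abs_minus_commute)
  have ex: "\<And>x a. (x, a) \<in> set (exits wl (lp \<pi>)) \<Longrightarrow> x = l \<and> a = \<pi> \<or> x = u \<and> a = w - \<pi> \<and> \<pi> > 0"
    using exits_lp exits_lp0 \<pi> by (case_tac "\<pi> = 0") auto
  have ex': "\<And>x a. (x, a) \<in> set (exits wl (lp \<pi>')) \<Longrightarrow> x = l \<and> a = \<pi>' \<or> x = u \<and> a = w - \<pi>' \<and> \<pi>' > 0"
    using exits_lp exits_lp0 \<pi>' by (case_tac "\<pi>' = 0") auto
  have "Min (?S \<union> ?D) = \<bar>\<pi> - \<pi>'\<bar>"
  proof (rule Min_eqI)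
    show "finite (?S \<union> ?D)" using D by (intro finite_UnI[OF pd_finite]) simp
    fix r assume "r \<in> ?S \<union> ?D"
    then show "\<bar>\<pi> - \<pi>'\<bar> \<le> r"
    proof
      assume "r \<in> ?S"
      then obtain x a y b where r: "r = a + vdist V E wl x y + b" "(x, a) \<in> set (exits wl (lp \<pi>))" "(y, b) \<in> set (exits wl (lp \<pi>'))"
        by blast
      show ?thesis using ex[OF r(2)] ex'[OF r(3)] r(1) vdist_lu vdist_ll vdist_refl[OF uV] \<pi> \<pi>' by auto
    next
      assume "r \<in> ?D" then show ?thesis using D by (auto split: if_splits)
    qed
  next
    show "\<bar>\<pi> - \<pi>'\<bar> \<in> ?S \<union> ?D"
    proof (cases "\<pi> = 0 \<or> \<pi>' = 0")
      case False then show ?thesis using D by simp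
    next
      case True
      have "(l, \<pi>) \<in> set (exits wl (lp \<pi>))" using exits_lp exits_lp0 \<pi> by (cases "\<pi> = 0") auto
      moreover have "(l, \<pi>') \<in> set (exits wl (lp \<pi>'))" using exits_lp exits_lp0 \<pi>' by (cases "\<pi>' = 0") auto
      moreover have "\<bar>\<pi> - \<pi>'\<bar> = \<pi> + vdist V E wl l l + \<pi>'" using True vdist_ll \<pi> \<pi>' by auto
      ultimately show ?thesis by blast
    qed
  qed
  then show ?thesis unfolding pdist_def .
qed

end



lemma is_walk_drop: "is_walk V E xs \<Longrightarrow> i < length xs \<Longrightarrow> is_walk V E (drop i xs)"
  unfolding is_walk_def
proof (intro conjI allI impI)
  assume h: "xs \<noteq> [] \<and> set xs \<subseteq> V \<and> (\<forall>i. Suc i < length xs \<longrightarrow> adj E (xs ! i) (xs ! Suc i))" "i < length xs"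
  show "drop i xs \<noteq> []" using h by simp
  show "set (drop i xs) \<subseteq> V" using h set_drop_subset by fast
  fix j assume "Suc j < length (drop i xs)"
  then have "Suc (i + j) < length xs" by simp
  then have "adj E (xs ! (i + j)) (xs ! Suc (i + j))" using h by blast
  then show "adj E (drop i xs ! j) (drop i xs ! Suc j)" using h by (simp add: nth_drop)
qed

lemma (in wg) leaf_exists:
  assumes nc: "\<not> has_cycle V E" and c2: "card V \<ge> 2"
  shows "\<exists>l u e0. leafg V E wl l u e0"
proof -
  let ?P = "{xs. is_walk V E xs \<and> distinct xs}"
  have finP: "finite ?P"
    by (rule finite_subset[OF _ finite_subset_distinct[OF finV]]) (auto simp: is_walk_def)
  obtain v1 v2 where v12: "v1 \<in> V" "v2 \<in> V" "v1 \<noteq> v2"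
  proof -
    have "\<not> card V \<le> 1" using c2 by simp
    then have "\<exists>x\<in>V. \<exists>y\<in>V. x \<noteq> y" using card_le_Suc0_iff_eq[OF finV] by auto
    then show ?thesis using that by blast
  qed
  obtain zs where zs: "is_walk V E zs" "hd zs = v1" "last zs = v2" using conn v12 unfolding connected_graph_def by blast
  obtain a b zs' where "zs = a # b # zs'"
    using zs v12 by (cases zs; cases "tl zs") (auto simp: is_walk_def)
  then have ab: "a \<in> V" "adj E a b" "b \<in> V" using zs by (auto simp: is_walk_Cons2 dest: is_walk_hd)
  have "a \<noteq> b" using ab anti by (auto simp: adj_def)
  then have "[a, b] \<in> ?P" using ab by (simp add: is_walk_Cons2)
  then have neP: "length ` ?P \<noteq> {}" by blast
  obtain xs where xs: "xs \<in> ?P" "length xs = Max (length ` ?P)"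
    using Max_in[OF finite_imageI[OF finP] neP] by auto
  have maxl: "length ys \<le> length xs" if "ys \<in> ?P" for ys
  proof -
    have "length ys \<in> length ` ?P" using that by blast
    then show ?thesis using xs(2) Max_ge[OF finite_imageI[OF finP]] by metis
  qed
  have len2: "length xs \<ge> 2" using maxl[OF \<open>[a,b] \<in> ?P\<close>] by simp
  define n where "n = length xs"
  define l where "l = last xs"
  define u where "u = xs ! (n - 2)"
  have l_nth: "l = xs ! (n - 1)" unfolding l_def n_def using len2 by (subst last_conv_nth) auto
  have wx: "is_walk V E xs" "distinct xs" using xs by auto
  have adjul: "adj E u l"
  proof -
    have "Suc (n-2) < length xs" using len2 n_def by simp
    then have "adj E (xs!(n-2)) (xs!Suc(n-2))" using wx(1) unfolding is_walk_def by blast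
    moreover have "Suc(n-2) = n - 1" using len2 n_def by simp
    ultimately show ?thesis by (simp add: u_def l_nth)
  qed
  have lV: "l \<in> V" using wx len2 unfolding is_walk_def l_def by auto
  have uV: "u \<in> V" using wx len2 unfolding is_walk_def u_def n_def by auto
  have lu: "l \<noteq> u" using nth_eq_iff_index_eq[OF wx(2), of "n-1" "n-2"] len2 unfolding l_nth u_def n_def by auto
  have leaf: "z = u" if az: "adj E l z" for z
  proof (rule ccontr)
    assume zu: "z \<noteq> u"
    have zV: "z \<in> V" using az subE by (auto simp: adj_def)
    show False
    proof (cases "z \<in> set xs")
      case False
      have "is_walk V E (xs @ [z])"
      proof -
        obtain ys where ys: "xs = ys @ [l]" using len2 unfolding l_def
          by (metis append_butlast_last_id list.size(3) not_numeral_le_zero)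
        have "is_walk V E (ys @ [l])" using wx ys by simp
        moreover have "is_walk V E [l, z]" using az lV zV by (simp add: is_walk_Cons2)
        ultimately show ?thesis using is_walk_append[of V E ys l "[z]"] ys by simp
      qed
      then have "xs @ [z] \<in> ?P" using False wx by simp
      then show False using maxl[of "xs @ [z]"] by simp
    next
      case True
      then obtain i where i: "i < n" "xs ! i = z" unfolding n_def by (metis in_set_conv_nth)
      have "i \<noteq> n - 1" using i az anti unfolding adj_def l_nth by auto
      moreover have "i \<noteq> n - 2" using i zu unfolding u_def by auto
      ultimately have i3: "i + 3 \<le> n" using i by linarith
      let ?C = "drop i xs"
      have "is_walk V E ?C" using is_walk_drop[OF wx(1)] i unfolding n_def by blast
      moreover have "distinct ?C" using wx by simp
      moreover have "length ?C \<ge> 3" using i3 unfolding n_def by simp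
      moreover have "hd ?C = z" using i by (simp add: hd_drop_conv_nth n_def)
      moreover have "last ?C = l" using i unfolding l_def n_def by simp
      ultimately have "has_cycle V E" unfolding has_cycle_def using az by (metis adj_sym)
      then show False using nc by simp
    qed
  qed
  obtain e0 where e0: "e0 \<in> E" "e0 = (l, u) \<or> e0 = (u, l)" using adjul unfolding adj_def by blast
  have "leafg V E wl l u e0"
    by (rule leafg.intro[OF wg_axioms], rule leafg_axioms.intro) (use lV uV lu e0 leaf in auto)
  then show ?thesis by blast
qed

lemma (in leafg) nocycle': "\<not> has_cycle V E \<Longrightarrow> \<not> has_cycle V' E'"
  unfolding has_cycle_def using walk'_walk adj_E'_E by blast




definition capt :: "'v set \<Rightarrow> ('v \<times> 'v) set \<Rightarrow> ('v \<times> 'v \<Rightarrow> real) \<Rightarrow> 'v gpoint set \<Rightarrow> 'v gpoint \<Rightarrow> 'v gpoint set" where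
  "capt V E wl F s = {p \<in> gpoints V E wl. \<forall>f\<in>F. pdist V E wl p s \<le> pdist V E wl p f}"

definition slice :: "('v \<times> 'v \<Rightarrow> real) \<Rightarrow> 'v \<times> 'v \<Rightarrow> 'v gpoint set \<Rightarrow> real set" where
  "slice wl e R = {t. 0 < t \<and> t < wl e \<and> Ed e t \<in> R}"

definition wt :: "'v set \<Rightarrow> ('v \<times> 'v) set \<Rightarrow> ('v \<Rightarrow> real) \<Rightarrow> ('v \<times> 'v \<Rightarrow> real) \<Rightarrow> 'v gpoint set \<Rightarrow> real" where
  "wt V E wv wl R = (\<Sum>v\<in>{v\<in>V. Vx v \<in> R}. wv v) + (\<Sum>e\<in>E. measure lborel (slice wl e R))"

definition good :: "'v set \<Rightarrow> ('v \<times> 'v) set \<Rightarrow> ('v \<Rightarrow> real) \<Rightarrow> ('v \<times> 'v \<Rightarrow> real) \<Rightarrow> real \<Rightarrow> 'v gpoint set \<Rightarrow> bool" where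
  "good V E wv wl c F \<longleftrightarrow> (\<forall>s \<in> gpoints V E wl - F. \<exists>R. R \<subseteq> gpoints V E wl \<and> capt V E wl F s \<subseteq> R \<and>
      wt V E wv wl R \<le> c \<and> (\<forall>e\<in>E. slice wl e R \<in> sets lborel))"

lemma wt_empty[simp]: "wt V E wv wl {} = 0"
  by (simp add: wt_def slice_def)

context wg
begin

lemma exits_nonneg: "p \<in> gpoints V E wl \<Longrightarrow> (x, a) \<in> set (exits wl p) \<Longrightarrow> x \<in> V \<and> a \<ge> 0"
  using subE by (auto simp: gpoints_def)

lemma pdist_nonneg: "p \<in> gpoints V E wl \<Longrightarrow> q \<in> gpoints V E wl \<Longrightarrow> pdist V E wl p q \<ge> 0"
proof -
  assume pq: "p \<in> gpoints V E wl" "q \<in> gpoints V E wl"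
  obtain x a where xa: "(x, a) \<in> set (exits wl p)" using exits_ne[of wl p] by (metis all_not_in_conv surj_pair)
  obtain y b where yb: "(y, b) \<in> set (exits wl q)" using exits_ne[of wl q] by (metis all_not_in_conv surj_pair)
  let ?S = "{a + vdist V E wl x y + b | x a y b. (x, a) \<in> set (exits wl p) \<and> (y, b) \<in> set (exits wl q)}"
  let ?D = "(case (p, q) of (Ed e t, Ed e' s) \<Rightarrow> (if e = e' then {\<bar>t - s\<bar>} else {}) | _ \<Rightarrow> {})"
  have ne: "?S \<union> ?D \<noteq> {}" using xa yb by blast
  have "\<forall>r\<in>?S \<union> ?D. 0 \<le> r"
  proof
    fix r assume "r \<in> ?S \<union> ?D"
    then show "0 \<le> r"
    proof
      assume "r \<in> ?S"
      then obtain x a y b where "r = a + vdist V E wl x y + b" "(x, a) \<in> set (exits wl p)" "(y, b) \<in> set (exits wl q)" by blast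
      then show ?thesis using exits_nonneg[OF pq(1)] exits_nonneg[OF pq(2)] vdist_nonneg by fastforce
    qed (auto split: gpoint.splits if_splits)
  qed
  then show ?thesis unfolding pdist_def using Min_ge_iff[OF pdist_finite ne] by blast
qed

lemma pdist_Vx_self: "x \<in> V \<Longrightarrow> pdist V E wl (Vx x) (Vx x) = 0"
  unfolding pdist_Vx using vdist_refl by simp

end

context leafg
begin

interpretation T': wg V' E' wl by (rule wg')

definition pos :: "real \<Rightarrow> real" where "pos t = (if e0 = (l, u) then t else w - t)"

lemma finE: "finite E" using finV subE by (meson finite_SigmaI finite_subset)

lemma wt_decomp: "wt V E wv wl R = wt V' E' wv wl R + (if Vx l \<in> R then wv l else 0) + measure lborel (slice wl e0 R)"
proof -
  have "{v \<in> V. Vx v \<in> R} = {v \<in> V'. Vx v \<in> R} \<union> (if Vx l \<in> R then {l} else {})" using lV by auto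
  then have A: "(\<Sum>v\<in>{v\<in>V. Vx v \<in> R}. wv v) = (\<Sum>v\<in>{v\<in>V'. Vx v \<in> R}. wv v) + (if Vx l \<in> R then wv l else 0)"
    using finV by (simp add: sum.union_disjoint)
  have "E = insert e0 E'" using e0E by auto
  then have B: "(\<Sum>e\<in>E. measure lborel (slice wl e R)) = measure lborel (slice wl e0 R) + (\<Sum>e\<in>E'. measure lborel (slice wl e R))"
    using finE by (metis Diff_iff finite_Diff insertI1 sum.insert)
  show ?thesis unfolding wt_def A B by simp
qed

lemma lp_Vx_iff: "Vx l \<in> lp ` A \<longleftrightarrow> 0 \<in> A"
  by (auto simp: lp_def image_iff split: if_splits)

lemma lp_Vx_other: "x \<noteq> l \<Longrightarrow> Vx x \<notin> lp ` A"
  by (auto simp: lp_def)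

lemma lp_Ed_other: "e \<noteq> e0 \<Longrightarrow> Ed e t \<notin> lp ` A"
  by (auto simp: lp_def)

lemma pos_pos: "pos (pos t) = t" by (simp add: pos_def)

lemma lp_Ed_iff: "0 < t \<Longrightarrow> t < w \<Longrightarrow> Ed e0 t \<in> lp ` A \<longleftrightarrow> pos t \<in> A"
proof
  assume t: "0 < t" "t < w"
  { assume "Ed e0 t \<in> lp ` A"
    then obtain \<pi> where "\<pi> \<in> A" "lp \<pi> = Ed e0 t" by auto
    then show "pos t \<in> A" by (auto simp: lp_def pos_def split: if_splits) }
  { assume h: "pos t \<in> A"
    have "pos t \<noteq> 0" using t by (auto simp: pos_def)
    then have "lp (pos t) = Ed e0 t" by (simp add: lp_def pos_def)
    then show "Ed e0 t \<in> lp ` A" using h by (metis image_eqI) }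
qed

definition lw :: "('v \<Rightarrow> real) \<Rightarrow> real set \<Rightarrow> real" where
  "lw wv A = (if 0 \<in> A then wv l else 0) + measure lborel {t. 0 < t \<and> t < w \<and> pos t \<in> A}"

lemma slice_lp: "B \<subseteq> gpoints V' E' wl \<Longrightarrow> slice wl e0 (B \<union> lp ` A) = {t. 0 < t \<and> t < w \<and> pos t \<in> A}"
proof -
  assume B: "B \<subseteq> gpoints V' E' wl"
  have "Ed e0 t \<notin> B" for t using B by (auto simp: gpoints_def)
  then show ?thesis unfolding slice_def using lp_Ed_iff by auto
qed

lemma slice_lp_other: "e \<in> E' \<Longrightarrow> slice wl e (B \<union> lp ` A) = slice wl e B"
  unfolding slice_def using lp_Ed_other by auto

lemma wt_lp: "B \<subseteq> gpoints V' E' wl \<Longrightarrow> wt V E wv wl (B \<union> lp ` A) = wt V' E' wv wl B + lw wv A"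
proof -
  assume B: "B \<subseteq> gpoints V' E' wl"
  have "Vx l \<notin> B" using B by (auto simp: gpoints_def)
  then have vl: "(Vx l \<in> B \<union> lp ` A) \<longleftrightarrow> 0 \<in> A" using lp_Vx_iff by auto
  have "{v \<in> V'. Vx v \<in> B \<union> lp ` A} = {v \<in> V'. Vx v \<in> B}" using lp_Vx_other by auto
  moreover have "(\<Sum>e\<in>E'. measure lborel (slice wl e (B \<union> lp ` A))) = (\<Sum>e\<in>E'. measure lborel (slice wl e B))"
    using slice_lp_other by simp
  ultimately have "wt V' E' wv wl (B \<union> lp ` A) = wt V' E' wv wl B" by (simp add: wt_def)
  then show ?thesis unfolding wt_decomp[of wv "B \<union> lp ` A"] vl slice_lp[OF B] lw_def by simp
qed

lemma wt_upd: "wt V' E' (wv(u := wv u + y)) wl B = wt V' E' wv wl B + (if Vx u \<in> B then y else 0)"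
proof -
  have uV': "u \<in> V'" using uV lu by simp
  have fin: "finite {v \<in> V'. Vx v \<in> B}" using finV by simp
  show ?thesis
  proof (cases "Vx u \<in> B")
    case True
    then have "u \<in> {v \<in> V'. Vx v \<in> B}" using uV' by simp
    then have "(\<Sum>v\<in>{v\<in>V'. Vx v \<in> B}. (wv(u := wv u + y)) v) = (\<Sum>v\<in>{v\<in>V'. Vx v \<in> B}. wv v) + y"
    proof -
      let ?A = "{v\<in>V'. Vx v \<in> B}"
      have "(\<Sum>v\<in>?A. (wv(u := wv u + y)) v) = (wv(u := wv u + y)) u + (\<Sum>v\<in>?A - {u}. (wv(u := wv u + y)) v)"
        by (rule sum.remove[OF fin \<open>u \<in> ?A\<close>])
      also have "(\<Sum>v\<in>?A - {u}. (wv(u := wv u + y)) v) = (\<Sum>v\<in>?A - {u}. wv v)" by (intro sum.cong) auto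
      also have "(\<Sum>v\<in>?A. wv v) = wv u + (\<Sum>v\<in>?A - {u}. wv v)" by (rule sum.remove[OF fin \<open>u \<in> ?A\<close>])
      ultimately show ?thesis by simp
    qed
    then show ?thesis using True by (simp add: wt_def)
  next
    case False
    then have "(\<Sum>v\<in>{v\<in>V'. Vx v \<in> B}. (wv(u := wv u + y)) v) = (\<Sum>v\<in>{v\<in>V'. Vx v \<in> B}. wv v)"
      by (intro sum.cong) auto
    then show ?thesis using False by (simp add: wt_def)
  qed
qed

end



locale cutg = leafg +
  fixes c :: real and wv :: "_ \<Rightarrow> real" and F'
  assumes cpos: "c > 0" and wvnn: "\<forall>v\<in>V. wv v \<ge> 0" and F'sub: "F' \<subseteq> gpoints V' E' wl"
begin

definition "x0 = (if c \<le> wv l then 0 else c - wv l)"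
definition "n = nat \<lceil>(w - x0) / c\<rceil>"
definition "P = (\<lambda>j. x0 + real j * c) ` {..<n}"
definition "mP = x0 + real (n - 1) * c"
definition "LS = {\<pi>. 0 \<le> \<pi> \<and> \<pi> < w \<and> (n = 0 \<or> mP < \<pi>)}"
definition "yy = (if n = 0 then wv l + w else w - mP)"
definition "Lreg \<sigma> = {\<pi>. 0 \<le> \<pi> \<and> \<pi> < w \<and> \<lfloor>(\<pi> - x0) / c\<rfloor> = \<lfloor>(\<sigma> - x0) / c\<rfloor> \<and> (\<pi> = 0 \<longrightarrow> wv l < c)}"
definition "FF = F' \<union> lp ` P"

lemma wvl: "wv l \<ge> 0" using wvnn lV by blast

lemma x0_facts: "0 \<le> x0" "x0 \<le> c" "wv l < c \<Longrightarrow> x0 = c - wv l" "c \<le> wv l \<Longrightarrow> x0 = 0"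
  using wvl cpos by (auto simp: x0_def)

lemma n0_iff: "n = 0 \<longleftrightarrow> w \<le> x0"
proof -
  have "n = 0 \<longleftrightarrow> \<lceil>(w - x0) / c\<rceil> \<le> 0" by (simp add: n_def)
  also have "\<dots> \<longleftrightarrow> (w - x0) / c \<le> 0" by (simp add: ceiling_le_zero)
  also have "\<dots> \<longleftrightarrow> w \<le> x0" using cpos by (simp add: divide_le_0_iff)
  finally show ?thesis .
qed

lemma n_real: "n > 0 \<Longrightarrow> real n = of_int \<lceil>(w - x0) / c\<rceil>"
  unfolding n_def by simp

lemma mP_facts:
  assumes "n > 0" shows "mP < w" "w \<le> mP + c" "x0 \<le> mP" "0 \<le> mP"
proof -
  let ?r = "(w - x0) / c"
  have nr: "real n = of_int \<lceil>?r\<rceil>" using n_real assms .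
  have "of_int \<lceil>?r\<rceil> - 1 < ?r" by linarith
  then have "real n - 1 < ?r" using nr by simp
  then have "(real n - 1) * c < w - x0" using cpos by (simp add: pos_less_divide_eq)
  moreover have "real (n - 1) = real n - 1" using assms by simp
  ultimately show "mP < w" unfolding mP_def by (simp add: algebra_simps)
  have "?r \<le> real n" using nr by linarith
  then have "w - x0 \<le> real n * c" using cpos by (simp add: pos_divide_le_eq)
  then show "w \<le> mP + c" unfolding mP_def using \<open>real (n - 1) = real n - 1\<close> by (simp add: algebra_simps)
  show "x0 \<le> mP" unfolding mP_def using cpos by simp
  then show "0 \<le> mP" using x0_facts by linarith
qed

lemma lt_n: "x0 + real j * c < w \<Longrightarrow> j < n"
proof -
  assume h: "x0 + real j * c < w"
  then have "real j < (w - x0) / c" using cpos by (simp add: pos_less_divide_eq algebra_simps)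
  then have "real j < of_int \<lceil>(w - x0) / c\<rceil>" by linarith
  then have "int j < \<lceil>(w - x0) / c\<rceil>" by linarith
  then show "j < n" unfolding n_def by linarith
qed

lemma P_le_mP: "x \<in> P \<Longrightarrow> x \<le> mP"
  using cpos by (auto simp: P_def mP_def)

lemma P_range: "x \<in> P \<Longrightarrow> 0 \<le> x \<and> x < w"
proof -
  assume x: "x \<in> P"
  then have "n > 0" by (auto simp: P_def)
  have "x \<le> mP" using x P_le_mP by blast
  then show ?thesis using x mP_facts[OF \<open>n > 0\<close>] x0_facts cpos by (auto simp: P_def)
qed

lemma mP_in: "n > 0 \<Longrightarrow> mP \<in> P"
  unfolding P_def mP_def by (rule image_eqI[of _ _ "n - 1"]) auto

lemma P_mem: "j < n \<Longrightarrow> x0 + real j * c \<in> P"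
  unfolding P_def by auto

lemma finP: "finite P" by (simp add: P_def)

lemma card_P: "card P = n"
proof -
  have "inj_on (\<lambda>j. x0 + real j * c) {..<n}" using cpos by (auto simp: inj_on_def)
  then show ?thesis unfolding P_def by (simp add: card_image)
qed

lemma yy_pos: "yy > 0"
  using mP_facts w_pos wvl by (auto simp: yy_def)

lemma yy_count: "wv l + w - yy \<ge> real n * c"
proof (cases "n = 0")
  case True then show ?thesis by (simp add: yy_def)
next
  case False
  then have "real (n - 1) = real n - 1" by simp
  then have "wv l + w - yy = wv l + x0 + (real n - 1) * c" using False by (simp add: yy_def mP_def)
  then show ?thesis using x0_facts[of] wvl by (cases "c \<le> wv l") (auto simp: algebra_simps)
qed

end



context cutg
begin

interpretation T': wg V' E' wl by (rule wg')

lemma uT': "Vx u \<in> gpoints V' E' wl" using uV lu by (simp add: gpoints_def)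

lemma FF_sub: "FF \<subseteq> gpoints V E wl"
  using F'sub gpoints_T' lp_in P_range by (auto simp: FF_def)

lemma C1:
  assumes s: "s \<in> gpoints V' E' wl" and p: "p \<in> gpoints V' E' wl" and pc: "p \<in> capt V E wl FF s"
  shows "p \<in> capt V' E' wl F' s"
  unfolding capt_def
proof (intro CollectI conjI ballI)
  show "p \<in> gpoints V' E' wl" by (rule p)
  fix f assume f: "f \<in> F'"
  then have "pdist V E wl p s \<le> pdist V E wl p f" using pc by (auto simp: capt_def FF_def)
  then show "pdist V' E' wl p s \<le> pdist V' E' wl p f" using pdist_D1 s p f F'sub by auto
qed

lemma C2:
  assumes s: "s \<in> gpoints V' E' wl" and \<pi>: "0 \<le> \<pi>" "\<pi> < w" and pc: "lp \<pi> \<in> capt V E wl FF s"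
  shows "Vx u \<in> capt V' E' wl F' s \<and> \<pi> \<in> LS"
proof
  have le: "pdist V E wl (lp \<pi>) s \<le> pdist V E wl (lp \<pi>) f" if "f \<in> FF" for f
    using pc that by (auto simp: capt_def)
  have ds: "pdist V E wl (lp \<pi>) s = (w - \<pi>) + pdist V' E' wl (Vx u) s" using pdist_D2[OF \<pi> s] .
  show "Vx u \<in> capt V' E' wl F' s" unfolding capt_def
  proof (intro CollectI conjI ballI)
    show "Vx u \<in> gpoints V' E' wl" by (rule uT')
    fix f assume f: "f \<in> F'"
    have "pdist V E wl (lp \<pi>) f = (w - \<pi>) + pdist V' E' wl (Vx u) f" using pdist_D2[OF \<pi>] f F'sub by auto
    then show "pdist V' E' wl (Vx u) s \<le> pdist V' E' wl (Vx u) f" using le[of f] f ds by (auto simp: FF_def)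
  qed
  show "\<pi> \<in> LS"
  proof (cases "n = 0")
    case True then show ?thesis using \<pi> by (simp add: LS_def)
  next
    case False
    then have mP: "mP \<in> P" using mP_in by simp
    then have "lp mP \<in> FF" by (simp add: FF_def)
    then have "pdist V E wl (lp \<pi>) s \<le> pdist V E wl (lp \<pi>) (lp mP)" by (rule le)
    also have "\<dots> = \<bar>\<pi> - mP\<bar>" using pdist_D3[OF \<pi>] P_range[OF mP] by simp
    finally have "(w - \<pi>) + pdist V' E' wl (Vx u) s \<le> \<bar>\<pi> - mP\<bar>" using ds by simp
    moreover have "pdist V' E' wl (Vx u) s \<ge> 0" using T'.pdist_nonneg[OF uT' s] .
    ultimately have "mP < \<pi>" using P_range[OF mP] by (cases "\<pi> \<le> mP") auto
    then show ?thesis using \<pi> by (simp add: LS_def)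
  qed
qed

lemma C3:
  assumes \<sigma>: "0 \<le> \<sigma>" "\<sigma> < w" "\<sigma> \<notin> P" and q: "q \<in> gpoints V' E' wl" and qc: "q \<in> capt V E wl FF (lp \<sigma>)"
  shows "Vx u \<notin> F' \<and> \<sigma> \<in> LS \<and> q \<in> capt V' E' wl F' (Vx u)"
proof -
  have le: "pdist V E wl q (lp \<sigma>) \<le> pdist V E wl q f" if "f \<in> FF" for f
    using qc that by (auto simp: capt_def)
  have ds: "pdist V E wl q (lp \<sigma>) = (w - \<sigma>) + pdist V' E' wl q (Vx u)"
    using pdist_sym pdist_D2[OF \<sigma>(1,2) q] T'.pdist_sym by simp
  have dnn: "pdist V' E' wl q (Vx u) \<ge> 0" using T'.pdist_nonneg[OF q uT'] .
  have ws: "w - \<sigma> > 0" using \<sigma> by simp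
  have A: "Vx u \<notin> F'"
  proof
    assume "Vx u \<in> F'"
    then have "pdist V E wl q (lp \<sigma>) \<le> pdist V E wl q (Vx u)" using le by (simp add: FF_def)
    also have "\<dots> = pdist V' E' wl q (Vx u)" using pdist_D1[OF q uT'] .
    finally show False using ds ws by simp
  qed
  have B: "\<sigma> \<in> LS"
  proof (cases "n = 0")
    case True then show ?thesis using \<sigma> by (simp add: LS_def)
  next
    case False
    then have mP: "mP \<in> P" using mP_in by simp
    then have "lp mP \<in> FF" by (simp add: FF_def)
    then have "pdist V E wl q (lp \<sigma>) \<le> pdist V E wl q (lp mP)" by (rule le)
    also have "\<dots> = (w - mP) + pdist V' E' wl q (Vx u)"
      using pdist_sym pdist_D2[OF _ _ q, of mP] P_range[OF mP] T'.pdist_sym by simp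
    finally have "\<sigma> \<ge> mP" using ds by simp
    moreover have "\<sigma> \<noteq> mP" using mP \<sigma>(3) by auto
    ultimately show ?thesis using \<sigma> by (simp add: LS_def)
  qed
  have C: "q \<in> capt V' E' wl F' (Vx u)" unfolding capt_def
  proof (intro CollectI conjI ballI)
    show "q \<in> gpoints V' E' wl" by (rule q)
    fix f assume f: "f \<in> F'"
    then have "pdist V E wl q (lp \<sigma>) \<le> pdist V E wl q f" using le by (simp add: FF_def)
    also have "\<dots> = pdist V' E' wl q f" using pdist_D1[OF q] f F'sub by auto
    finally show "pdist V' E' wl q (Vx u) \<le> pdist V' E' wl q f" using ds ws by simp
  qed
  show ?thesis using A B C by blast
qed

lemma C4:
  assumes \<sigma>: "0 \<le> \<sigma>" "\<sigma> < w" "\<sigma> \<notin> P" and \<pi>: "0 \<le> \<pi>" "\<pi> < w" and pc: "lp \<pi> \<in> capt V E wl FF (lp \<sigma>)"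
  shows "\<pi> \<in> Lreg \<sigma>"
proof -
  have le: "\<bar>\<pi> - \<sigma>\<bar> \<le> \<bar>\<pi> - x\<bar>" if "x \<in> P" for x
  proof -
    have "lp x \<in> FF" using that by (simp add: FF_def)
    then have "pdist V E wl (lp \<pi>) (lp \<sigma>) \<le> pdist V E wl (lp \<pi>) (lp x)" using pc by (auto simp: capt_def)
    then show ?thesis using pdist_D3[OF \<pi>] pdist_D3[OF \<pi> \<sigma>(1,2)] P_range[OF that] by simp
  qed
  have \<pi>P: "\<pi> \<notin> P"
  proof
    assume "\<pi> \<in> P"
    then have "\<bar>\<pi> - \<sigma>\<bar> \<le> 0" using le[of \<pi>] by simp
    then have "\<pi> = \<sigma>" by simp
    then show False using \<open>\<pi> \<in> P\<close> \<sigma>(3) by simp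
  qed
  have fl_ge: "\<lfloor>(z - x0) / c\<rfloor> \<ge> -1" if "0 \<le> z" for z
  proof -
    have "(z - x0) / c \<ge> -1" using that x0_facts cpos by (simp add: le_divide_eq)
    then show ?thesis by linarith
  qed
  have cutP: "x0 + real_of_int j * c \<in> P" if "0 \<le> j" "x0 + real_of_int j * c < w" for j :: int
  proof -
    have "x0 + real (nat j) * c < w" using that by simp
    then have "nat j < n" by (rule lt_n)
    then show ?thesis using P_mem[of "nat j"] that by simp
  qed
  have fl: "\<lfloor>(\<pi> - x0) / c\<rfloor> = \<lfloor>(\<sigma> - x0) / c\<rfloor>"
  proof (rule ccontr)
    assume ne: "\<lfloor>(\<pi> - x0) / c\<rfloor> \<noteq> \<lfloor>(\<sigma> - x0) / c\<rfloor>"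
    let ?jp = "\<lfloor>(\<pi> - x0) / c\<rfloor>" and ?js = "\<lfloor>(\<sigma> - x0) / c\<rfloor>"
    have jp1: "of_int ?jp \<le> (\<pi> - x0) / c" "(\<pi> - x0) / c < of_int ?jp + 1" by linarith+
    have js1: "of_int ?js \<le> (\<sigma> - x0) / c" "(\<sigma> - x0) / c < of_int ?js + 1" by linarith+
    have jp2: "x0 + of_int ?jp * c \<le> \<pi>" "\<pi> < x0 + (of_int ?jp + 1) * c"
      using jp1 cpos by (simp_all add: le_divide_eq divide_less_eq algebra_simps)
    have js2: "x0 + of_int ?js * c \<le> \<sigma>" "\<sigma> < x0 + (of_int ?js + 1) * c"
      using js1 cpos by (simp_all add: le_divide_eq divide_less_eq algebra_simps)
    show False
    proof (cases "?jp < ?js")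
      case True
      have "?js \<ge> 0" using True fl_ge[OF \<pi>(1)] by linarith
      let ?x = "x0 + of_int ?js * c"
      have xP: "?x \<in> P" using cutP[of ?js] \<open>?js \<ge> 0\<close> js2 \<sigma> by linarith
      have "real_of_int ?jp + 1 \<le> of_int ?js" using True by linarith
      then have "(of_int ?jp + 1) * c \<le> of_int ?js * c" using cpos by (simp add: mult_right_mono)
      then have "\<pi> < ?x" using jp2 by linarith
      moreover have "?x < \<sigma>" using js2 xP \<sigma>(3) by (cases "?x = \<sigma>") auto
      ultimately show False using le[OF xP] by linarith
    next
      case False
      then have True: "?js < ?jp" using ne by linarith
      have "?jp \<ge> 0" using True fl_ge[OF \<sigma>(1)] by linarith
      let ?x = "x0 + of_int ?jp * c"
      have xP: "?x \<in> P" using cutP[of ?jp] \<open>?jp \<ge> 0\<close> jp2 \<pi> by linarith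
      have "real_of_int ?js + 1 \<le> of_int ?jp" using True by linarith
      then have "(of_int ?js + 1) * c \<le> of_int ?jp * c" using cpos by (simp add: mult_right_mono)
      then have "\<sigma> < ?x" using js2 by linarith
      moreover have "?x < \<pi>" using jp2 xP \<pi>P by (cases "?x = \<pi>") auto
      ultimately show False using le[OF xP] by linarith
    qed
  qed
  have z: "\<pi> = 0 \<longrightarrow> wv l < c"
  proof
    assume "\<pi> = 0"
    show "wv l < c"
    proof (rule ccontr)
      assume "\<not> wv l < c"
      then have "x0 = 0" using x0_facts by simp
      then have "0 < n" using n0_iff w_pos by simp
      then have "x0 + real 0 * c \<in> P" by (rule P_mem)
      then show False using \<open>x0 = 0\<close> \<open>\<pi> = 0\<close> \<pi>P by simp
    qed
  qed
  show ?thesis unfolding Lreg_def using \<pi> fl z by simp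
qed

end



lemma meas_le_Icc: "S \<subseteq> {a..b} \<Longrightarrow> a \<le> b \<Longrightarrow> measure lborel S \<le> b - a"
proof (cases "S \<in> sets lborel")
  case True
  assume "S \<subseteq> {a..b}" "a \<le> b"
  have "{a..b} \<in> fmeasurable lborel" using fmeasurable_cbox[of a b] by (simp add: cbox_interval)
  then have "measure lborel S \<le> measure lborel {a..b}"
    using measure_mono_fmeasurable \<open>S \<subseteq> {a..b}\<close> True by blast
  then show ?thesis using \<open>a \<le> b\<close> by simp
next
  case False
  assume "S \<subseteq> {a..b}" "a \<le> b"
  then show ?thesis using measure_notin_sets[OF False] by simp
qed

lemma pred_sets_lborel: "P \<in> measurable lborel (count_space UNIV) \<Longrightarrow> {t. P t} \<in> sets lborel"
proof -
  assume "P \<in> measurable lborel (count_space UNIV)"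
  then have "{x\<in>space lborel. P x} \<in> sets lborel" by (rule predE)
  then show ?thesis by simp
qed

context cutg
begin

lemma MB: "A \<subseteq> {\<alpha>..\<beta>} \<Longrightarrow> \<alpha> \<le> \<beta> \<Longrightarrow> measure lborel {t. 0 < t \<and> t < w \<and> pos t \<in> A} \<le> \<beta> - \<alpha>"
proof -
  assume A: "A \<subseteq> {\<alpha>..\<beta>}" and ab: "\<alpha> \<le> \<beta>"
  show ?thesis
  proof (cases "e0 = (l, u)")
    case True
    have "pos t = t" for t unfolding pos_def using True by simp
    then have "{t. 0 < t \<and> t < w \<and> pos t \<in> A} \<subseteq> {\<alpha>..\<beta>}" using A by auto
    then show ?thesis using meas_le_Icc ab by blast
  next
    case False
    have "pos t = w - t" for t unfolding pos_def using False by simp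
    then have "{t. 0 < t \<and> t < w \<and> pos t \<in> A} \<subseteq> {w - \<beta>..w - \<alpha>}" using A by force
    then show ?thesis using meas_le_Icc[of _ "w - \<beta>" "w - \<alpha>"] ab by simp
  qed
qed

lemma lw_le: "A \<subseteq> {\<alpha>..\<beta>} \<Longrightarrow> \<alpha> \<le> \<beta> \<Longrightarrow> 0 \<notin> A \<Longrightarrow> lw wv A \<le> \<beta> - \<alpha>"
  using MB by (simp add: lw_def)

lemma lw_le0: "A \<subseteq> {0..\<beta>} \<Longrightarrow> 0 \<le> \<beta> \<Longrightarrow> lw wv A \<le> wv l + \<beta>"
  using MB[of A 0 \<beta>] wvl by (simp add: lw_def)

lemma W1: "lw wv LS \<le> yy"
proof (cases "n = 0")
  case True
  have "LS \<subseteq> {0..w}" by (auto simp: LS_def)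
  then show ?thesis using lw_le0[of LS w] True w_pos by (simp add: yy_def)
next
  case False
  have "LS \<subseteq> {mP..w}" using False by (auto simp: LS_def)
  moreover have "0 \<notin> LS" using False mP_facts by (auto simp: LS_def)
  ultimately show ?thesis using lw_le[of LS mP w] False mP_facts by (simp add: yy_def)
qed

lemma W2: "\<sigma> \<in> LS \<Longrightarrow> lw wv (Lreg \<sigma>) \<le> yy"
proof (cases "n = 0")
  case True
  have "Lreg \<sigma> \<subseteq> {0..w}" by (auto simp: Lreg_def)
  then show ?thesis using lw_le0[of "Lreg \<sigma>" w] True w_pos by (simp add: yy_def)
next
  case False
  assume \<sigma>: "\<sigma> \<in> LS"
  then have s1: "mP < \<sigma>" "\<sigma> < w" using False by (auto simp: LS_def)
  have mp: "mP < w" "w \<le> mP + c" "x0 \<le> mP" "0 \<le> mP" using mP_facts False by auto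
  have rn: "real (n - 1) = real n - 1" using False by simp
  have "\<lfloor>(\<sigma> - x0) / c\<rfloor> = int (n - 1)"
  proof -
    have "real (n - 1) * c \<le> \<sigma> - x0" using s1 unfolding mP_def by simp
    then have a: "real (n - 1) \<le> (\<sigma> - x0) / c" using cpos by (simp add: le_divide_eq)
    have "\<sigma> - x0 < (real (n - 1) + 1) * c" using s1 mp unfolding mP_def by (simp add: algebra_simps)
    then have b: "(\<sigma> - x0) / c < real (n - 1) + 1" using cpos by (simp add: divide_less_eq)
    show ?thesis using a b by (simp add: floor_eq_iff)
  qed
  then have sub: "Lreg \<sigma> \<subseteq> {mP..w}"
  proof -
    assume fl: "\<lfloor>(\<sigma> - x0) / c\<rfloor> = int (n - 1)"
    { fix \<pi> assume "\<pi> \<in> Lreg \<sigma>"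
      then have "\<lfloor>(\<pi> - x0) / c\<rfloor> = int (n - 1)" "\<pi> < w" using fl by (auto simp: Lreg_def)
      then have "real (n - 1) \<le> (\<pi> - x0) / c" by linarith
      then have "real (n - 1) * c \<le> \<pi> - x0" using cpos by (simp add: le_divide_eq)
      then have "\<pi> \<in> {mP..w}" using \<open>\<pi> < w\<close> unfolding mP_def by simp }
    then show ?thesis by blast
  qed
  have "0 \<notin> Lreg \<sigma>"
  proof
    assume "0 \<in> Lreg \<sigma>"
    then have "wv l < c" by (simp add: Lreg_def)
    then have "x0 > 0" using x0_facts wvl by simp
    then have "0 < mP" using mp by simp
    then show False using sub \<open>0 \<in> Lreg \<sigma>\<close> by auto
  qed
  then show ?thesis using lw_le[OF sub] mp False by (simp add: yy_def)
qed

lemma W3: "0 \<le> \<sigma> \<Longrightarrow> lw wv (Lreg \<sigma>) \<le> c"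
proof -
  assume \<sigma>0: "0 \<le> \<sigma>"
  let ?j = "\<lfloor>(\<sigma> - x0) / c\<rfloor>"
  show ?thesis
  proof (cases "?j < 0")
    case True
    then have "(\<sigma> - x0) / c < 0" by linarith
    then have "\<sigma> < x0" using cpos by (simp add: divide_less_0_iff)
    then have "x0 > 0" using \<sigma>0 by simp
    then have wl: "wv l < c" "x0 = c - wv l" using x0_facts by (auto simp: x0_def split: if_splits)
    have "Lreg \<sigma> \<subseteq> {0..x0}"
    proof
      fix \<pi> assume "\<pi> \<in> Lreg \<sigma>"
      then have "\<lfloor>(\<pi> - x0) / c\<rfloor> < 0" "0 \<le> \<pi>" using True by (auto simp: Lreg_def)
      then have "(\<pi> - x0) / c < 0" by linarith
      then have "\<pi> < x0" using cpos by (simp add: divide_less_0_iff)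
      then show "\<pi> \<in> {0..x0}" using \<open>0 \<le> \<pi>\<close> by simp
    qed
    then show ?thesis using lw_le0[of "Lreg \<sigma>" x0] wl x0_facts by simp
  next
    case False
    have sub: "Lreg \<sigma> \<subseteq> {x0 + of_int ?j * c .. x0 + (of_int ?j + 1) * c}"
    proof
      fix \<pi> assume "\<pi> \<in> Lreg \<sigma>"
      then have fl: "\<lfloor>(\<pi> - x0) / c\<rfloor> = ?j" by (simp add: Lreg_def)
      have "of_int ?j \<le> (\<pi> - x0) / c" "(\<pi> - x0) / c < of_int ?j + 1" using fl by linarith+
      then have "of_int ?j * c \<le> \<pi> - x0" "\<pi> - x0 < (of_int ?j + 1) * c"
        using cpos by (simp_all add: le_divide_eq divide_less_eq)
      then show "\<pi> \<in> {x0 + of_int ?j * c .. x0 + (of_int ?j + 1) * c}" by simp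
    qed
    have "0 \<notin> Lreg \<sigma>"
    proof
      assume z: "0 \<in> Lreg \<sigma>"
      then have "wv l < c" by (simp add: Lreg_def)
      then have x0c: "x0 = c - wv l" "x0 > 0" using x0_facts wvl by auto
      have "\<lfloor>(0 - x0) / c\<rfloor> = ?j" using z by (simp add: Lreg_def)
      moreover have "(0 - x0) / c < 0" using x0c cpos by (simp add: divide_less_0_iff)
      ultimately show False using False by linarith
    qed
    then show ?thesis using lw_le[OF sub] cpos by (simp add: algebra_simps)
  qed
qed

lemma meas_LS: "{t. 0 < t \<and> t < w \<and> pos t \<in> LS} \<in> sets lborel"
  unfolding LS_def pos_def by (rule pred_sets_lborel) measurable

lemma meas_Lreg: "{t. 0 < t \<and> t < w \<and> pos t \<in> Lreg \<sigma>} \<in> sets lborel"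
  unfolding Lreg_def pos_def by (rule pred_sets_lborel) measurable

end



lemma goodE:
  assumes "good V E wv wl c F" "s \<in> gpoints V E wl" "s \<notin> F"
  obtains R where "R \<subseteq> gpoints V E wl" "capt V E wl F s \<subseteq> R" "wt V E wv wl R \<le> c"
    "\<forall>e\<in>E. slice wl e R \<in> sets lborel"
proof -
  have "s \<in> gpoints V E wl - F" using assms by simp
  then have "\<exists>R. R \<subseteq> gpoints V E wl \<and> capt V E wl F s \<subseteq> R \<and> wt V E wv wl R \<le> c \<and> (\<forall>e\<in>E. slice wl e R \<in> sets lborel)"
    by (rule bspec[OF assms(1)[unfolded good_def]])
  then show ?thesis using that by blast
qed

lemma exR: "R \<subseteq> G \<Longrightarrow> C \<subseteq> R \<Longrightarrow> W R \<le> c \<Longrightarrow> (\<forall>e\<in>E. S e R \<in> M) \<Longrightarrow>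
   \<exists>R. R \<subseteq> G \<and> C \<subseteq> R \<and> W R \<le> c \<and> (\<forall>e\<in>E. S e R \<in> M)"
  by blast

context cutg
begin

interpretation T': wg V' E' wl by (rule wg')

lemma finFF: "finite F' \<Longrightarrow> finite FF" using finP by (simp add: FF_def)

lemma card_FF: "finite F' \<Longrightarrow> card FF = card F' + n"
proof -
  assume fin: "finite F'"
  have disj: "F' \<inter> lp ` P = {}" using F'sub gp_lp_notin by auto
  have "inj_on lp P" using lp_inj P_range by (auto simp: inj_on_def)
  then have "card (lp ` P) = n" using card_P by (simp add: card_image)
  then show ?thesis unfolding FF_def using card_Un_disjoint[OF fin finite_imageI[OF finP] disj] by simp
qed

lemma tw_split: "total_weight V E wv wl = total_weight V' E' (wv(u := wv u + yy)) wl + (wv l + w - yy)"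
proof -
  have uV': "u \<in> V'" using uV lu by simp
  have fV': "finite V'" using finV by simp
  have a: "(\<Sum>v\<in>V. wv v) = wv l + (\<Sum>v\<in>V'. wv v)" using sum.remove[OF finV lV] by simp
  have b: "(\<Sum>v\<in>V'. (wv(u := wv u + yy)) v) = (\<Sum>v\<in>V'. wv v) + yy"
  proof -
    have "(\<Sum>v\<in>V'. (wv(u := wv u + yy)) v) = (wv(u := wv u + yy)) u + (\<Sum>v\<in>V' - {u}. (wv(u := wv u + yy)) v)"
      by (rule sum.remove[OF fV' uV'])
    also have "(\<Sum>v\<in>V' - {u}. (wv(u := wv u + yy)) v) = (\<Sum>v\<in>V' - {u}. wv v)" by (intro sum.cong) auto
    moreover have "(\<Sum>v\<in>V'. wv v) = wv u + (\<Sum>v\<in>V' - {u}. wv v)" by (rule sum.remove[OF fV' uV'])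
    ultimately show ?thesis by simp
  qed
  have c: "(\<Sum>e\<in>E. wl e) = w + (\<Sum>e\<in>E'. wl e)" using sum.remove[OF finE e0E] by simp
  show ?thesis unfolding total_weight_def a b c by simp
qed

lemma tw'_ge: "total_weight V' E' (wv(u := wv u + yy)) wl \<ge> yy"
proof -
  have uV': "u \<in> V'" using uV lu by simp
  have fV': "finite V'" using finV by simp
  have nn: "\<forall>v\<in>V'. (wv(u := wv u + yy)) v \<ge> 0" using wvnn yy_pos by auto
  have "(wv(u := wv u + yy)) u \<le> (\<Sum>v\<in>V'. (wv(u := wv u + yy)) v)"
    by (rule member_le_sum[OF uV' _ fV']) (use wvnn in auto)
  moreover have "(wv(u := wv u + yy)) u \<ge> yy" using wvnn uV by simp
  moreover have "(\<Sum>e\<in>E'. wl e) \<ge> 0" using posw by (intro sum_nonneg) auto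
  ultimately show ?thesis unfolding total_weight_def by linarith
qed

lemma lw_empty: "lw wv {} = 0" by (simp add: lw_def)

lemma capt_self': "Vx u \<in> capt V' E' wl F' (Vx u)"
  unfolding capt_def
proof (intro CollectI conjI ballI)
  show "Vx u \<in> gpoints V' E' wl" by (rule uT')
  fix f assume "f \<in> F'"
  then show "pdist V' E' wl (Vx u) (Vx u) \<le> pdist V' E' wl (Vx u) f"
    using T'.pdist_Vx_self[of u] uV lu T'.pdist_nonneg[OF uT'] F'sub by auto
qed

lemma gp_cases: "s \<in> gpoints V E wl \<Longrightarrow> s \<in> gpoints V' E' wl \<or> (\<exists>\<sigma>. 0 \<le> \<sigma> \<and> \<sigma> < w \<and> s = lp \<sigma>)"
  using gpoints_split by auto

lemma good_step:
  assumes g': "good V' E' (wv(u := wv u + yy)) wl c F'"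
  shows "good V E wv wl c FF"
  unfolding good_def
proof
  fix s assume s: "s \<in> gpoints V E wl - FF"
  let ?wv' = "wv(u := wv u + yy)"
  have lpsub: "lp ` A \<subseteq> gpoints V E wl" if "A \<subseteq> {\<pi>. 0 \<le> \<pi> \<and> \<pi> < w}" for A
    using that lp_in by auto
  have LSsub: "LS \<subseteq> {\<pi>. 0 \<le> \<pi> \<and> \<pi> < w}" by (auto simp: LS_def)
  have Lregsub: "Lreg \<sigma> \<subseteq> {\<pi>. 0 \<le> \<pi> \<and> \<pi> < w}" for \<sigma> by (auto simp: Lreg_def)
  have capt_in: "capt V E wl FF s \<subseteq> gpoints V E wl" by (auto simp: capt_def)
  show "\<exists>R. R \<subseteq> gpoints V E wl \<and> capt V E wl FF s \<subseteq> R \<and> wt V E wv wl R \<le> c \<and> (\<forall>e\<in>E. slice wl e R \<in> sets lborel)"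
  proof (cases "s \<in> gpoints V' E' wl")
    case True
    have "s \<notin> F'" using s by (simp add: FF_def)
    then obtain R' where R': "R' \<subseteq> gpoints V' E' wl" "capt V' E' wl F' s \<subseteq> R'" "wt V' E' ?wv' wl R' \<le> c"
      "\<forall>e\<in>E'. slice wl e R' \<in> sets lborel"
      using goodE[OF g' True \<open>s \<notin> F'\<close>] by blast
    define A where "A = (if Vx u \<in> R' then LS else {})"
    define R where "R = R' \<union> lp ` A"
    have "R \<subseteq> gpoints V E wl" unfolding R_def A_def using R'(1) gpoints_T' lpsub[OF LSsub] by auto
    moreover have "capt V E wl FF s \<subseteq> R"
    proof
      fix p assume p: "p \<in> capt V E wl FF s"
      then have "p \<in> gpoints V' E' wl \<or> (\<exists>\<pi>. 0 \<le> \<pi> \<and> \<pi> < w \<and> p = lp \<pi>)" using capt_in gp_cases by blast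
      then show "p \<in> R"
      proof
        assume "p \<in> gpoints V' E' wl"
        then show ?thesis using C1[OF True _ p] R'(2) by (auto simp: R_def)
      next
        assume "\<exists>\<pi>. 0 \<le> \<pi> \<and> \<pi> < w \<and> p = lp \<pi>"
        then obtain \<pi> where \<pi>: "0 \<le> \<pi>" "\<pi> < w" "p = lp \<pi>" by blast
        then have "Vx u \<in> capt V' E' wl F' s \<and> \<pi> \<in> LS" using C2[OF True \<pi>(1,2)] p by simp
        then show ?thesis using R'(2) \<pi>(3) by (auto simp: R_def A_def)
      qed
    qed
    moreover have "wt V E wv wl R \<le> c"
    proof -
      have "wt V E wv wl R = wt V' E' wv wl R' + lw wv A" unfolding R_def by (rule wt_lp[OF R'(1)])
      moreover have "wt V' E' ?wv' wl R' = wt V' E' wv wl R' + (if Vx u \<in> R' then yy else 0)" by (rule wt_upd)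
      moreover have "lw wv A \<le> (if Vx u \<in> R' then yy else 0)" using W1 lw_empty by (simp add: A_def)
      ultimately show ?thesis using R'(3) by linarith
    qed
    moreover have "\<forall>e\<in>E. slice wl e R \<in> sets lborel"
    proof
      fix e assume e: "e \<in> E"
      show "slice wl e R \<in> sets lborel"
      proof (cases "e = e0")
        case True
        then have "slice wl e R = {t. 0 < t \<and> t < w \<and> pos t \<in> A}" unfolding R_def using slice_lp[OF R'(1)] by simp
        then show ?thesis using meas_LS by (simp add: A_def)
      next
        case False
        then show ?thesis using slice_lp_other[of e R' A] R'(4) e by (simp add: R_def)
      qed
    qed
    ultimately show ?thesis by (rule exR)
  next
    case False
    then obtain \<sigma> where \<sigma>: "0 \<le> \<sigma>" "\<sigma> < w" "s = lp \<sigma>" using gp_cases s by blast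
    have \<sigma>P: "\<sigma> \<notin> P" using s \<sigma>(3) by (auto simp: FF_def)
    have in_lp: "p \<in> lp ` Lreg \<sigma>" if "p \<in> capt V E wl FF s" "p \<notin> gpoints V' E' wl" for p
    proof -
      have "p \<in> gpoints V E wl" using capt_in that(1) by (rule subsetD)
      then have "\<exists>\<pi>. 0 \<le> \<pi> \<and> \<pi> < w \<and> p = lp \<pi>" using gp_cases that(2) by blast
      then obtain \<pi> where \<pi>: "0 \<le> \<pi>" "\<pi> < w" "p = lp \<pi>" by blast
      then show ?thesis using C4[OF \<sigma>(1,2) \<sigma>P \<pi>(1,2)] that(1) \<sigma>(3) by auto
    qed
    show ?thesis
    proof (cases "Vx u \<notin> F' \<and> \<sigma> \<in> LS")
      case True
      then have "Vx u \<in> gpoints V' E' wl - F'" using uT' by simp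
      then obtain R' where R': "R' \<subseteq> gpoints V' E' wl" "capt V' E' wl F' (Vx u) \<subseteq> R'" "wt V' E' ?wv' wl R' \<le> c"
        "\<forall>e\<in>E'. slice wl e R' \<in> sets lborel"
        using goodE[OF g', of "Vx u"] by blast
      define R where "R = R' \<union> lp ` Lreg \<sigma>"
      have "R \<subseteq> gpoints V E wl" unfolding R_def using R'(1) gpoints_T' lpsub[OF Lregsub] by auto
      moreover have "capt V E wl FF s \<subseteq> R"
      proof
        fix p assume p: "p \<in> capt V E wl FF s"
        show "p \<in> R"
        proof (cases "p \<in> gpoints V' E' wl")
          case True
          then show ?thesis using C3[OF \<sigma>(1,2) \<sigma>P True] p \<sigma>(3) R'(2) by (auto simp: R_def)
        next
          case False then show ?thesis using in_lp p by (auto simp: R_def)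
        qed
      qed
      moreover have "wt V E wv wl R \<le> c"
      proof -
        have "wt V E wv wl R = wt V' E' wv wl R' + lw wv (Lreg \<sigma>)" unfolding R_def by (rule wt_lp[OF R'(1)])
        moreover have "Vx u \<in> R'" using capt_self' R'(2) by blast
        moreover have "wt V' E' ?wv' wl R' = wt V' E' wv wl R' + (if Vx u \<in> R' then yy else 0)" by (rule wt_upd)
        moreover have "lw wv (Lreg \<sigma>) \<le> yy" using W2 True by blast
        ultimately show ?thesis using R'(3) by simp
      qed
      moreover have "\<forall>e\<in>E. slice wl e R \<in> sets lborel"
      proof
        fix e assume e: "e \<in> E"
        show "slice wl e R \<in> sets lborel"
        proof (cases "e = e0")
          case True
          then show ?thesis unfolding R_def using slice_lp[OF R'(1)] meas_Lreg by simp
        next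
          case False
          then show ?thesis using slice_lp_other[of e R' "Lreg \<sigma>"] R'(4) e by (simp add: R_def)
        qed
      qed
      ultimately show ?thesis by (rule exR)
    next
      case False
      define R where "R = {} \<union> lp ` Lreg \<sigma>"
      have "R \<subseteq> gpoints V E wl" unfolding R_def using lpsub[OF Lregsub] by auto
      moreover have "capt V E wl FF s \<subseteq> R"
      proof
        fix p assume p: "p \<in> capt V E wl FF s"
        show "p \<in> R"
        proof (cases "p \<in> gpoints V' E' wl")
          case True
          then show ?thesis using C3[OF \<sigma>(1,2) \<sigma>P True] p \<sigma>(3) False by auto
        next
          case False then show ?thesis using in_lp p by (auto simp: R_def)
        qed
      qed
      moreover have "wt V E wv wl R \<le> c"
      proof -
        have "wt V E wv wl R = wt V' E' wv wl {} + lw wv (Lreg \<sigma>)" unfolding R_def by (rule wt_lp) simp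
        then show ?thesis using W3[OF \<sigma>(1)] by simp
      qed
      moreover have "\<forall>e\<in>E. slice wl e R \<in> sets lborel"
      proof
        fix e assume e: "e \<in> E"
        show "slice wl e R \<in> sets lborel"
        proof (cases "e = e0")
          case True
          then show ?thesis unfolding R_def using slice_lp[of "{}"] meas_Lreg by simp
        next
          case False
          then have "slice wl e R = slice wl e {}" using slice_lp_other[of e "{}" "Lreg \<sigma>"] e by (simp add: R_def)
          moreover have "slice wl e {} = {}" by (simp add: slice_def)
          ultimately show ?thesis by simp
        qed
      qed
      ultimately show ?thesis by (rule exR)
    qed
  qed
qed

end



definition tgraph :: "'v set \<Rightarrow> ('v \<times> 'v) set \<Rightarrow> ('v \<Rightarrow> real) \<Rightarrow> ('v \<times> 'v \<Rightarrow> real) \<Rightarrow> bool" where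
  "tgraph V E wv wl \<longleftrightarrow> wg V E wl \<and> V \<noteq> {} \<and> (\<forall>v\<in>V. wv v \<ge> 0) \<and> \<not> has_cycle V E"

lemma core:
  assumes "tgraph V E wv wl" "c > 0"
  shows "\<exists>F. F \<subseteq> gpoints V E wl \<and> finite F \<and> (card F = 0 \<or> real (card F) * c < total_weight V E wv wl)
            \<and> good V E wv wl c F"
  using assms
proof (induction "card V" arbitrary: V E wv rule: less_induct)
  case less
  interpret wg V E wl using less.prems by (simp add: tgraph_def)
  have Vne: "V \<noteq> {}" and wvnn: "\<forall>v\<in>V. wv v \<ge> 0" and nc: "\<not> has_cycle V E"
    using less.prems by (auto simp: tgraph_def)
  show ?case
  proof (cases "card V \<ge> 2")
    case False
    have "card V \<noteq> 0" using Vne finV by simp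
    then have "card V = 1" using False by simp
    then obtain r where Vr: "V = {r}" by (rule card_1_singletonE)
    have E0: "E = {}" using subE anti Vr by auto
    have gp: "gpoints V E wl = {Vx r}" using Vr E0 by (simp add: gpoints_def)
    have tw: "total_weight V E wv wl = wv r" using Vr E0 by (simp add: total_weight_def)
    show ?thesis
    proof (cases "wv r \<le> c")
      case True
      have "good V E wv wl c {}"
        unfolding good_def
      proof
        fix s assume "s \<in> gpoints V E wl - {}"
        have "{Vx r} \<subseteq> gpoints V E wl" using gp by simp
        moreover have "capt V E wl {} s \<subseteq> {Vx r}" using gp by (auto simp: capt_def)
        moreover have "wt V E wv wl {Vx r} \<le> c" using True Vr E0 by (simp add: wt_def)
        moreover have "\<forall>e\<in>E. slice wl e {Vx r} \<in> sets lborel" using E0 by simp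
        ultimately show "\<exists>R. R \<subseteq> gpoints V E wl \<and> capt V E wl {} s \<subseteq> R \<and> wt V E wv wl R \<le> c \<and> (\<forall>e\<in>E. slice wl e R \<in> sets lborel)"
          by (rule exR)
      qed
      then show ?thesis by (intro exI[of _ "{}"]) simp
    next
      case False
      have "good V E wv wl c {Vx r}" unfolding good_def using gp by simp
      moreover have "real (card {Vx r}) * c < total_weight V E wv wl" using False tw by simp
      ultimately show ?thesis using gp by (intro exI[of _ "{Vx r}"]) simp
    qed
  next
    case True
    obtain l u e0 where lf: "leafg V E wl l u e0" using leaf_exists[OF nc True] by blast
    interpret L: leafg V E wl l u e0 by (rule lf)
    interpret C0: cutg V E wl l u e0 c wv "{}"
      by (rule cutg.intro[OF lf], rule cutg_axioms.intro) (use less.prems(2) wvnn in auto)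
    define wv' where "wv' = wv(u := wv u + C0.yy)"
    have tg': "tgraph L.V' L.E' wv' wl"
      unfolding tgraph_def
    proof (intro conjI)
      show "wg L.V' L.E' wl" by (rule L.wg')
      show "L.V' \<noteq> {}" using L.uV L.lu by auto
      show "\<forall>v\<in>L.V'. 0 \<le> wv' v" using wvnn C0.yy_pos by (auto simp: wv'_def)
      show "\<not> has_cycle L.V' L.E'" using L.nocycle' nc by blast
    qed
    have "card L.V' < card V" using finV L.lV True by simp
    then obtain F' where F': "F' \<subseteq> gpoints L.V' L.E' wl" "finite F'"
      "card F' = 0 \<or> real (card F') * c < total_weight L.V' L.E' wv' wl" "good L.V' L.E' wv' wl c F'"
      using less.hyps[OF _ tg' less.prems(2)] by blast
    interpret C: cutg V E wl l u e0 c wv F'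
      by (rule cutg.intro[OF lf], rule cutg_axioms.intro) (use less.prems(2) wvnn F'(1) in auto)
    have yyeq: "C.yy = C0.yy" by (simp add: C.yy_def C0.yy_def)
    have g: "good V E wv wl c C.FF" using C.good_step F'(4) yyeq by (simp add: wv'_def)
    have cnt: "card C.FF = 0 \<or> real (card C.FF) * c < total_weight V E wv wl"
    proof -
      have cF: "card C.FF = card F' + C.n" using C.card_FF[OF F'(2)] .
      have tw: "total_weight V E wv wl = total_weight L.V' L.E' wv' wl + (wv l + L.w - C.yy)"
        using C.tw_split yyeq by (simp add: wv'_def)
      have tw'ge: "total_weight L.V' L.E' wv' wl \<ge> C.yy" using C.tw'_ge yyeq by (simp add: wv'_def)
      have ncnt: "wv l + L.w - C.yy \<ge> real C.n * c" by (rule C.yy_count)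
      have yp: "C.yy > 0" by (rule C.yy_pos)
      show ?thesis
      proof (cases "card F' = 0")
        case True
        then show ?thesis using cF tw tw'ge ncnt yp by (cases "C.n = 0") auto
      next
        case False
        then have "real (card F') * c < total_weight L.V' L.E' wv' wl" using F'(3) by simp
        then have "real (card F' + C.n) * c < total_weight V E wv wl" using tw ncnt by (simp add: algebra_simps)
        then show ?thesis using cF by simp
      qed
    qed
    show ?thesis using C.FF_sub C.finFF[OF F'(2)] cnt g by blast
  qed
qed




lemma sum_UN_le:
  fixes f :: "'a \<Rightarrow> real"
  assumes "finite I" "\<forall>i\<in>I. finite (A i)" "\<forall>x\<in>(\<Union>i\<in>I. A i). f x \<ge> 0"
  shows "sum f (\<Union>i\<in>I. A i) \<le> (\<Sum>i\<in>I. sum f (A i))"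
  using assms
proof (induction I rule: finite_induct)
  case empty then show ?case by simp
next
  case (insert i I)
  have fU: "finite (\<Union>j\<in>I. A j)" using insert by auto
  have fA: "finite (A i)" using insert by auto
  have "sum f (\<Union>j\<in>insert i I. A j) = sum f (A i \<union> (\<Union>j\<in>I. A j))" by simp
  also have "\<dots> = sum f (A i) + sum f (\<Union>j\<in>I. A j) - sum f (A i \<inter> (\<Union>j\<in>I. A j))"
    by (rule sum_Un[OF fA fU])
  also have "sum f (A i \<inter> (\<Union>j\<in>I. A j)) \<ge> 0" using insert.prems by (intro sum_nonneg) auto
  moreover have "sum f (\<Union>j\<in>I. A j) \<le> (\<Sum>j\<in>I. sum f (A j))" using insert by auto
  ultimately have "sum f (\<Union>j\<in>insert i I. A j) \<le> sum f (A i) + (\<Sum>j\<in>I. sum f (A j))" by linarith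
  then show ?case using insert by simp
qed

lemma capt_exists:
  assumes p: "p \<in> gpoints V E wl" and S: "finite S" "S \<noteq> {}" and F: "finite F" "F \<noteq> {}"
    and le: "setdist V E wl p S \<le> setdist V E wl p F"
  shows "\<exists>s\<in>S. p \<in> capt V E wl F s"
proof -
  obtain s where s: "s \<in> S" "pdist V E wl p s = Min ((\<lambda>a. pdist V E wl p a) ` S)"
  proof -
    have "Min ((\<lambda>a. pdist V E wl p a) ` S) \<in> (\<lambda>a. pdist V E wl p a) ` S" using S by (intro Min_in) auto
    then show ?thesis using that by (metis imageE)
  qed
  have "pdist V E wl p s \<le> pdist V E wl p f" if "f \<in> F" for f
  proof -
    have "Min ((\<lambda>a. pdist V E wl p a) ` F) \<le> pdist V E wl p f" using F that by simp
    then show ?thesis using le s unfolding setdist_def by simp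
  qed
  then show ?thesis using s p unfolding capt_def by blast
qed

lemma good_mono: "good V E wv wl c F0 \<Longrightarrow> F0 \<subseteq> F \<Longrightarrow> good V E wv wl c F"
proof -
  assume g: "good V E wv wl c F0" and sub: "F0 \<subseteq> F"
  have cs: "capt V E wl F s \<subseteq> capt V E wl F0 s" for s using sub by (auto simp: capt_def)
  show ?thesis unfolding good_def
  proof
    fix s assume "s \<in> gpoints V E wl - F"
    then have "s \<in> gpoints V E wl" "s \<notin> F0" using sub by auto
    then obtain R where "R \<subseteq> gpoints V E wl" "capt V E wl F0 s \<subseteq> R" "wt V E wv wl R \<le> c"
      "\<forall>e\<in>E. slice wl e R \<in> sets lborel" using goodE[OF g] by blast
    then show "\<exists>R. R \<subseteq> gpoints V E wl \<and> capt V E wl F s \<subseteq> R \<and> wt V E wv wl R \<le> c \<and> (\<forall>e\<in>E. slice wl e R \<in> sets lborel)"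
      using cs[of s] by (intro exR) auto
  qed
qed

lemma Q2_bound:
  assumes w: "wg V E wl" and wvnn: "\<forall>v\<in>V. wv v \<ge> 0" and g: "good V E wv wl c F"
    and F: "finite F" "F \<noteq> {}" and S: "S \<subseteq> gpoints V E wl" "finite S" "S \<noteq> {}" "S \<inter> F = {}"
  shows "Q2 V E wv wl F S \<le> real (card S) * c"
proof -
  interpret wg V E wl by (rule w)
  have finE: "finite E" using finV subE by (meson finite_SigmaI finite_subset)
  have "\<forall>s\<in>S. \<exists>R. R \<subseteq> gpoints V E wl \<and> capt V E wl F s \<subseteq> R \<and> wt V E wv wl R \<le> c \<and> (\<forall>e\<in>E. slice wl e R \<in> sets lborel)"
  proof
    fix s assume "s \<in> S"
    then have "s \<in> gpoints V E wl" "s \<notin> F" using S by auto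
    then obtain R where "R \<subseteq> gpoints V E wl" "capt V E wl F s \<subseteq> R" "wt V E wv wl R \<le> c"
      "\<forall>e\<in>E. slice wl e R \<in> sets lborel" using goodE[OF g] by blast
    then show "\<exists>R. R \<subseteq> gpoints V E wl \<and> capt V E wl F s \<subseteq> R \<and> wt V E wv wl R \<le> c \<and> (\<forall>e\<in>E. slice wl e R \<in> sets lborel)"
      by (rule exR)
  qed
  then obtain Rf where Rf: "\<And>s. s \<in> S \<Longrightarrow> Rf s \<subseteq> gpoints V E wl \<and> capt V E wl F s \<subseteq> Rf s \<and> wt V E wv wl (Rf s) \<le> c
      \<and> (\<forall>e\<in>E. slice wl e (Rf s) \<in> sets lborel)"
    by metis
  have cov: "\<exists>s\<in>S. p \<in> Rf s" if "p \<in> gpoints V E wl" "setdist V E wl p S \<le> setdist V E wl p F" for p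
    using capt_exists[OF that(1) S(2,3) F that(2)] Rf by blast
  let ?Cv = "{v\<in>V. setdist V E wl (Vx v) S \<le> setdist V E wl (Vx v) F}"
  let ?A = "\<lambda>s. {v\<in>V. Vx v \<in> Rf s}"
  have v1: "?Cv \<subseteq> (\<Union>s\<in>S. ?A s)"
  proof
    fix v assume v: "v \<in> ?Cv"
    then have "Vx v \<in> gpoints V E wl" by (simp add: gpoints_def)
    then show "v \<in> (\<Union>s\<in>S. ?A s)" using cov v by auto
  qed
  have vsum: "(\<Sum>v\<in>?Cv. wv v) \<le> (\<Sum>s\<in>S. \<Sum>v\<in>?A s. wv v)"
  proof -
    have "(\<Sum>v\<in>?Cv. wv v) \<le> (\<Sum>v\<in>(\<Union>s\<in>S. ?A s). wv v)"
      by (rule sum_mono2) (use v1 finV S wvnn in auto)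
    also have "\<dots> \<le> (\<Sum>s\<in>S. \<Sum>v\<in>?A s. wv v)"
      by (rule sum_UN_le) (use S finV wvnn in auto)
    finally show ?thesis .
  qed
  let ?Ce = "\<lambda>e. {t. 0 < t \<and> t < wl e \<and> setdist V E wl (Ed e t) S \<le> setdist V E wl (Ed e t) F}"
  have esum: "measure lborel (?Ce e) \<le> (\<Sum>s\<in>S. measure lborel (slice wl e (Rf s)))" if e: "e \<in> E" for e
  proof -
    have sub: "?Ce e \<subseteq> (\<Union>s\<in>S. slice wl e (Rf s))"
    proof
      fix t assume t: "t \<in> ?Ce e"
      then have "Ed e t \<in> gpoints V E wl" using e unfolding gpoints_def by blast
      then obtain s where "s \<in> S" "Ed e t \<in> Rf s" using cov t by blast
      then show "t \<in> (\<Union>s\<in>S. slice wl e (Rf s))" using t by (auto simp: slice_def)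
    qed
    have ms: "slice wl e (Rf s) \<in> sets lborel" if "s \<in> S" for s using Rf[OF that] e by blast
    have mU: "(\<Union>s\<in>S. slice wl e (Rf s)) \<in> sets lborel" using ms S(2) by (intro sets.finite_UN) auto
    have bU: "(\<Union>s\<in>S. slice wl e (Rf s)) \<subseteq> {0..wl e}" by (auto simp: slice_def)
    have fU: "(\<Union>s\<in>S. slice wl e (Rf s)) \<in> fmeasurable lborel"
    proof -
      have "{0..wl e} \<in> fmeasurable lborel" using fmeasurable_cbox[of 0 "wl e"] by (simp add: cbox_interval)
      then show ?thesis using bU mU by (rule fmeasurableI2)
    qed
    have "measure lborel (?Ce e) \<le> measure lborel (\<Union>s\<in>S. slice wl e (Rf s))"
    proof (cases "?Ce e \<in> sets lborel")
      case True show ?thesis by (rule measure_mono_fmeasurable[OF sub True fU])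
    next
      case False then show ?thesis using measure_notin_sets[OF False] by simp
    qed
    also have "\<dots> \<le> (\<Sum>s\<in>S. measure lborel (slice wl e (Rf s)))"
      by (rule measure_UNION_le[OF S(2)]) (use ms in auto)
    finally show ?thesis .
  qed
  have "Q2 V E wv wl F S = (\<Sum>v\<in>?Cv. wv v) + (\<Sum>e\<in>E. measure lborel (?Ce e))" by (simp add: Q2_def)
  also have "\<dots> \<le> (\<Sum>s\<in>S. \<Sum>v\<in>?A s. wv v) + (\<Sum>e\<in>E. \<Sum>s\<in>S. measure lborel (slice wl e (Rf s)))"
    using vsum esum by (intro add_mono sum_mono) auto
  also have "(\<Sum>e\<in>E. \<Sum>s\<in>S. measure lborel (slice wl e (Rf s))) = (\<Sum>s\<in>S. \<Sum>e\<in>E. measure lborel (slice wl e (Rf s)))"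
    by (rule sum.swap)
  also have "(\<Sum>s\<in>S. \<Sum>v\<in>?A s. wv v) + (\<Sum>s\<in>S. \<Sum>e\<in>E. measure lborel (slice wl e (Rf s))) = (\<Sum>s\<in>S. wt V E wv wl (Rf s))"
    by (simp add: wt_def sum.distrib)
  also have "\<dots> \<le> (\<Sum>s\<in>S. c)" using Rf by (intro sum_mono) auto
  finally show ?thesis by simp
qed




theorem corollary8:
  fixes V :: "'v set" and E :: "('v \<times> 'v) set"
    and wv :: "'v \<Rightarrow> real" and wl :: "'v \<times> 'v \<Rightarrow> real"
    and m k :: nat
  assumes "wgraph V E wv wl" and "is_tree V E"
    and "m \<ge> 1" and "k \<ge> 1"
  shows "\<exists>F. F \<subseteq> gpoints V E wl \<and> finite F \<and> card F = m \<and>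
           (\<forall>S. S \<subseteq> gpoints V E wl \<and> finite S \<and> card S = k \<and> S \<inter> F = {} \<longrightarrow>
              Q1 V E wv wl F S \<ge> (real m - real k + 1) / (real m + 1) * total_weight V E wv wl)"
proof -
  have finV: "finite V" and subE: "E \<subseteq> V \<times> V" and Ene: "E \<noteq> {}"
    and anti: "\<forall>(u,v)\<in>E. u \<noteq> v \<and> (v,u) \<notin> E" and wvnn: "\<forall>v\<in>V. wv v \<ge> 0" and posw: "\<forall>e\<in>E. wl e > 0"
    using assms(1) by (auto simp: wgraph_def)
  have conn: "connected_graph V E" and nc: "\<not> has_cycle V E" using assms(2) by (auto simp: is_tree_def)
  have w: "wg V E wl" using finV subE anti posw conn by unfold_locales
  have finE: "finite E" using finV subE by (meson finite_SigmaI finite_subset)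
  obtain e where e: "e \<in> E" using Ene by blast
  have "V \<noteq> {}" using e subE by auto
  then have tg: "tgraph V E wv wl" using w wvnn nc by (simp add: tgraph_def)
  define W where "W = total_weight V E wv wl"
  have "(\<Sum>e\<in>E. wl e) \<ge> wl e" using finE e posw by (intro member_le_sum) auto
  moreover have "(\<Sum>v\<in>V. wv v) \<ge> 0" using wvnn by (intro sum_nonneg) auto
  ultimately have Wpos: "W > 0" using posw e unfolding W_def total_weight_def by fastforce
  define c where "c = W / (real m + 1)"
  have cpos: "c > 0" using Wpos by (simp add: c_def)
  have Wc: "W = (real m + 1) * c" by (simp add: c_def)
  obtain F0 where F0: "F0 \<subseteq> gpoints V E wl" "finite F0" "card F0 = 0 \<or> real (card F0) * c < W" "good V E wv wl c F0"
    using core[OF tg cpos] unfolding W_def by blast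
  have cF0: "card F0 \<le> m"
  proof (cases "card F0 = 0")
    case False
    then have "real (card F0) * c < (real m + 1) * c" using F0(3) Wc by simp
    then have "real (card F0) < real m + 1" using cpos by simp
    then show ?thesis by linarith
  qed simp
  have infG: "infinite (gpoints V E wl)"
  proof
    assume fin: "finite (gpoints V E wl)"
    have "Ed e ` {0<..<wl e} \<subseteq> gpoints V E wl"
    proof
      fix p assume "p \<in> Ed e ` {0<..<wl e}"
      then obtain t where "p = Ed e t" "0 < t" "t < wl e" by auto
      then show "p \<in> gpoints V E wl" using e unfolding gpoints_def by blast
    qed
    then have "finite (Ed e ` {0<..<wl e})" using fin finite_subset by blast
    moreover have "inj_on (Ed e) {0<..<wl e}" by (auto simp: inj_on_def)
    ultimately have "finite {0<..<wl e}" using finite_imageD by blast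
    then show False using infinite_Ioo[of 0 "wl e"] posw e by simp
  qed
  then have "infinite (gpoints V E wl - F0)" using F0(2) by simp
  then obtain B where B: "finite B" "card B = m - card F0" "B \<subseteq> gpoints V E wl - F0"
    using infinite_arbitrarily_large by blast
  define F where "F = F0 \<union> B"
  have Fsub: "F \<subseteq> gpoints V E wl" using F0(1) B(3) by (auto simp: F_def)
  have finF: "finite F" using F0(2) B(1) by (simp add: F_def)
  have cardF: "card F = m"
  proof -
    have "F0 \<inter> B = {}" using B(3) by auto
    then have "card F = card F0 + card B" unfolding F_def using card_Un_disjoint F0(2) B(1) by blast
    then show ?thesis using B(2) cF0 by simp
  qed
  have gF: "good V E wv wl c F" using good_mono[OF F0(4)] by (simp add: F_def)
  have Fne: "F \<noteq> {}" using cardF assms(3) by auto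
  have main: "Q1 V E wv wl F S \<ge> (real m - real k + 1) / (real m + 1) * total_weight V E wv wl"
    if S: "S \<subseteq> gpoints V E wl" "finite S" "card S = k" "S \<inter> F = {}" for S
  proof -
    have "S \<noteq> {}" using S(3) assms(4) by auto
    then have "Q2 V E wv wl F S \<le> real (card S) * c"
      using Q2_bound[OF w wvnn gF finF Fne S(1,2) _ S(4)] by blast
    then have "Q2 V E wv wl F S \<le> real k * c" using S(3) by simp
    moreover have "(real m - real k + 1) / (real m + 1) * W = W - real k * c"
      unfolding c_def by (simp add: field_simps)
    ultimately show ?thesis unfolding Q1_def W_def[symmetric] by linarith
  qed
  show ?thesis using Fsub finF cardF main by blast
qed



end
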